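(* Fix $m\in\mathbb N$. There is a constant $C_m>0$ such that for all $v,w\in F(t_1,t_2)$ with $|v|,|w|\le m$ and all $N\in\mathbb N$, the word $$\big[v(y_1,y_2),\,w(x_1,x_2)^N\big]\,\big[v(x_1,x_2),\,w(y_1,y_2)^N\big]^{-1}\in F(x_1,x_2,y_1,y_2)$$ represents the trivial element of $K$ and has area at most $C_m\cdot N^2$.
   Context: Let $F_2^{(a)},F_2^{(b)},F_2^{(c)}$ be free groups with bases $a_1,a_2$; $b_1,b_2$; $c_1,c_2$, let $\psi\colon F_2^{(a)}\times F_2^{(b)}\times F_2^{(c)}\to\mathbb Z^2$ send $a_i,b_i,c_i\mapsto e_i$, and $K=\ker\psi$. $K$ is generated by $x_i=a_ic_i^{-1}$, $y_i=b_ic_i^{-1}$ ($i=1,2$), with finite presentation $\langle x_1,x_2,y_1,y_2\mid [x_1,y_1],[x_2,y_2],[x_1^{\epsilon_1},y_2^{\epsilon_2}][x_2^{\epsilon_2},y_1^{\epsilon_1}]\ (\epsilon_1,\epsilon_2\in\{\pm1\})\rangle$, where $[g,h]=ghg^{-1}h^{-1}$. Area is with respect to this presentation: the least number of conjugates of relators or their inverses whose product is the given word in $F(x_1,x_2,y_1,y_2)$. For $w\in F(t_1,t_2)$, $w(u_1,u_2)$ is the image under $t_i\mapsto u_i$, and $|w|$ is word length. *)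

theory Defs
  imports Main "HOL-Library.Multiset" Complex_Main
begin

text \<open>A letter is a generator with a sign: (a, True) is a, (a, False) is a^-1.
  Words are lists of letters; elements of the free group are words modulo free equivalence.\<close>

type_synonym 'a word = "('a \<times> bool) list"

definition inv_word :: "'a word \<Rightarrow> 'a word" where
  "inv_word w = rev (map (\<lambda>(a, s). (a, \<not> s)) w)"

definition cancel1 :: "'a word \<Rightarrow> 'a word \<Rightarrow> bool" where
  "cancel1 xs ys \<longleftrightarrow> (\<exists>u v a s. xs = u @ [(a, s), (a, \<not> s)] @ v \<and> ys = u @ v)"

definition free_eq :: "'a word \<Rightarrow> 'a word \<Rightarrow> bool" where
  "free_eq = (\<lambda>x y. cancel1 x y \<or> cancel1 y x)\<^sup>*\<^sup>*"

definition comm :: "'a word \<Rightarrow> 'a word \<Rightarrow> 'a word" where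
  "comm g h = g @ h @ inv_word g @ inv_word h"

definition wpow :: "'a word \<Rightarrow> nat \<Rightarrow> 'a word" where
  "wpow w n = concat (replicate n w)"

datatype tgen = T1 | T2

definition subst2 :: "tgen word \<Rightarrow> 'a word \<Rightarrow> 'a word \<Rightarrow> 'a word" where
  "subst2 w u1 u2 = concat (map (\<lambda>(t, s).
      let u = (case t of T1 \<Rightarrow> u1 | T2 \<Rightarrow> u2) in if s then u else inv_word u) w)"

definition conj_prod :: "('a word \<times> 'a word \<times> bool) list \<Rightarrow> 'a word" where
  "conj_prod ps = concat (map (\<lambda>(u, r, e). u @ (if e then r else inv_word r) @ inv_word u) ps)"

definition null_rep :: "'a word set \<Rightarrow> 'a word \<Rightarrow> bool" where
  "null_rep R w \<longleftrightarrow> (\<exists>ps. (\<forall>(u, r, e) \<in> set ps. r \<in> R) \<and> free_eq w (conj_prod ps))"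

definition area :: "'a word set \<Rightarrow> 'a word \<Rightarrow> nat" where
  "area R w = (LEAST k. \<exists>ps. length ps = k \<and> (\<forall>(u, r, e) \<in> set ps. r \<in> R)
                              \<and> free_eq w (conj_prod ps))"

datatype kgen = X1 | X2 | Y1 | Y2

definition gw :: "'a \<Rightarrow> bool \<Rightarrow> 'a word" where
  "gw a s = [(a, s)]"

definition K_relators :: "kgen word set" where
  "K_relators = {comm (gw X1 True) (gw Y1 True), comm (gw X2 True) (gw Y2 True)}
     \<union> {comm (gw X1 e1) (gw Y2 e2) @ comm (gw X2 e2) (gw Y1 e1) | e1 e2. True}"


end

theory Submission
  imports Defs
begin

definition flipl :: "'a \<times> bool \<Rightarrow> 'a \<times> bool" where
  "flipl x = (fst x, \<not> snd x)"

lemma flipl_flipl[simp]: "flipl (flipl x) = x"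
  by (simp add: flipl_def)

lemma inv_word_alt: "inv_word w = rev (map flipl w)"
  unfolding inv_word_def flipl_def by (induction w) auto

lemma inv_Nil[simp]: "inv_word [] = []"
  by (simp add: inv_word_alt)

lemma inv_Cons[simp]: "inv_word (x # w) = inv_word w @ [flipl x]"
  by (simp add: inv_word_alt)

lemma inv_app[simp]: "inv_word (u @ v) = inv_word v @ inv_word u"
  by (simp add: inv_word_alt)

lemma inv_inv[simp]: "inv_word (inv_word u) = u"
  by (simp add: inv_word_alt rev_map o_def)

lemma length_inv[simp]: "length (inv_word u) = length u"
  by (simp add: inv_word_alt)

lemma fe_refl[simp, intro]: "free_eq x x"
  by (simp add: free_eq_def)

lemma fe_trans: "free_eq x y \<Longrightarrow> free_eq y z \<Longrightarrow> free_eq x z"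
  unfolding free_eq_def by (rule rtranclp_trans)

lemma fe_sym: "free_eq x y \<Longrightarrow> free_eq y x"
  unfolding free_eq_def
proof (induction rule: rtranclp_induct)
  case base
  then show ?case by simp
next
  case (step y z)
  have "(\<lambda>x y. cancel1 x y \<or> cancel1 y x) z y" using step(2) by auto
  then show ?case using step(3) by (rule converse_rtranclp_into_rtranclp)
qed

lemma cancel1_ctx: "cancel1 x y \<Longrightarrow> cancel1 (p @ x @ q) (p @ y @ q)"
  unfolding cancel1_def
  by (metis append.assoc)

lemma fe_ctx: "free_eq x y \<Longrightarrow> free_eq (p @ x @ q) (p @ y @ q)"
  unfolding free_eq_def
proof (induction rule: rtranclp_induct)
  case base
  then show ?case by simp
next
  case (step y z)
  have "(\<lambda>x y. cancel1 x y \<or> cancel1 y x) (p @ y @ q) (p @ z @ q)"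
    using step(2) cancel1_ctx by blast
  with step(3) show ?case by (rule rtranclp.rtrancl_into_rtrancl)
qed

lemma fe_app: "free_eq a b \<Longrightarrow> free_eq c d \<Longrightarrow> free_eq (a @ c) (b @ d)"
proof -
  assume 1: "free_eq a b" and 2: "free_eq c d"
  have "free_eq ([] @ a @ c) ([] @ b @ c)" by (rule fe_ctx[OF 1])
  moreover have "free_eq (b @ c @ []) (b @ d @ [])" by (rule fe_ctx[OF 2])
  ultimately show ?thesis by (auto intro: fe_trans)
qed

lemma fe_pair: "free_eq [x, flipl x] []"
proof -
  have "cancel1 [x, flipl x] []"
    unfolding cancel1_def flipl_def
    by (rule exI[of _ "[]"], rule exI[of _ "[]"], rule exI[of _ "fst x"], rule exI[of _ "snd x"]) simp
  then show ?thesis unfolding free_eq_def by auto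
qed

lemma fe_inv_r: "free_eq (u @ inv_word u) []"
proof (induction u)
  case Nil
  then show ?case by simp
next
  case (Cons x u)
  have "free_eq ([x] @ (u @ inv_word u) @ [flipl x]) ([x] @ [] @ [flipl x])"
    by (rule fe_ctx[OF Cons])
  then have "free_eq ((x # u) @ inv_word (x # u)) [x, flipl x]" by simp
  then show ?case using fe_pair fe_trans by blast
qed

lemma fe_inv_l: "free_eq (inv_word u @ u) []"
  using fe_inv_r[of "inv_word u"] by simp

lemma cancel1_inv: "cancel1 x y \<Longrightarrow> cancel1 (inv_word x) (inv_word y)"
  unfolding cancel1_def
proof (elim exE conjE)
  fix u v a s
  assume "x = u @ [(a, s), (a, \<not> s)] @ v" "y = u @ v"
  then show "\<exists>u' v' a' s'. inv_word x = u' @ [(a', s'), (a', \<not> s')] @ v' \<and> inv_word y = u' @ v'"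
    by (intro exI[of _ "inv_word v"] exI[of _ "inv_word u"] exI[of _ a] exI[of _ s])
       (simp add: flipl_def)
qed

lemma fe_inv: "free_eq x y \<Longrightarrow> free_eq (inv_word x) (inv_word y)"
  unfolding free_eq_def
proof (induction rule: rtranclp_induct)
  case base
  then show ?case by simp
next
  case (step y z)
  have "(\<lambda>x y. cancel1 x y \<or> cancel1 y x) (inv_word y) (inv_word z)"
    using step(2) cancel1_inv by blast
  with step(3) show ?case by (rule rtranclp.rtrancl_into_rtrancl)
qed

lemma fe_cancel_r: "free_eq (p @ u @ inv_word u @ q) (p @ q)"
  using fe_ctx[OF fe_inv_r[of u], of p q] by simp

lemma fe_cancel_l: "free_eq (p @ inv_word u @ u @ q) (p @ q)"
  using fe_ctx[OF fe_inv_l[of u], of p q] by simp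

fun red :: "'a word \<Rightarrow> 'a word" where
  "red [] = []"
| "red (x # w) = (case red w of [] \<Rightarrow> [x] | y # w' \<Rightarrow> (if y = flipl x then w' else x # y # w'))"

lemma fe_red: "free_eq w (red w)"
proof (induction w)
  case Nil
  then show ?case by simp
next
  case (Cons x w)
  have 1: "free_eq (x # w) (x # red w)"
    using fe_ctx[OF Cons, of "[x]" "[]"] by simp
  show ?case
  proof (cases "red w")
    case Nil
    then show ?thesis using 1 by simp
  next
    case (Cons y w')
    show ?thesis
    proof (cases "y = flipl x")
      case True
      have "free_eq ([] @ [x, flipl x] @ w') ([] @ [] @ w')"
        by (rule fe_ctx[OF fe_pair])
      then have "free_eq (x # red w) w'" using Cons True by simp
      then show ?thesis using 1 Cons True by (auto intro: fe_trans)
    next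
      case False
      then show ?thesis using 1 Cons by simp
    qed
  qed
qed

lemma fe_by_red: "red u = red v \<Longrightarrow> free_eq u v"
  by (metis fe_red fe_sym fe_trans)

definition NR :: "kgen word \<Rightarrow> bool" where
  "NR w \<longleftrightarrow> null_rep K_relators w"

lemma conj_prod_append[simp]: "conj_prod (a @ b) = conj_prod a @ conj_prod b"
  by (simp add: conj_prod_def)

lemma conj_prod_Nil[simp]: "conj_prod [] = []"
  by (simp add: conj_prod_def)

lemma conj_prod_Cons[simp]: "conj_prod ((c, r, e) # ps) = c @ (if e then r else inv_word r) @ inv_word c @ conj_prod ps"
  by (simp add: conj_prod_def)

lemma NR_free: "NR u \<Longrightarrow> free_eq u v \<Longrightarrow> NR v"
  unfolding NR_def null_rep_def
  by (elim exE conjE, rule_tac x=ps in exI) (blast intro: fe_trans fe_sym)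

lemma NR_Nil: "NR []"
  unfolding NR_def null_rep_def by (rule exI[of _ "[]"]) simp

lemma NR_app: "NR u \<Longrightarrow> NR v \<Longrightarrow> NR (u @ v)"
  unfolding NR_def null_rep_def
proof (elim exE conjE)
  fix ps qs
  assume "\<forall>(u, r, e)\<in>set ps. r \<in> K_relators" "free_eq u (conj_prod ps)"
    "\<forall>(u, r, e)\<in>set qs. r \<in> K_relators" "free_eq v (conj_prod qs)"
  then show "\<exists>ps. (\<forall>(u, r, e)\<in>set ps. r \<in> K_relators) \<and> free_eq (u @ v) (conj_prod ps)"
    by (intro exI[of _ "ps @ qs"]) (auto intro: fe_app)
qed

definition shiftp :: "kgen word \<Rightarrow> (kgen word \<times> kgen word \<times> bool) list \<Rightarrow> (kgen word \<times> kgen word \<times> bool) list" where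
  "shiftp p ps = map (\<lambda>(c, r, e). (p @ c, r, e)) ps"

lemma conj_shift: "free_eq (p @ conj_prod ps @ inv_word p) (conj_prod (shiftp p ps))"
proof (induction ps)
  case Nil
  then show ?case by (simp add: shiftp_def fe_inv_r)
next
  case (Cons x ps)
  obtain c r e where x: "x = (c, r, e)" by (cases x)
  let ?r = "(if e then r else inv_word r)"
  have "free_eq (p @ conj_prod (x # ps) @ inv_word p)
        ((p @ c @ ?r @ inv_word c @ inv_word p) @ (p @ conj_prod ps @ inv_word p))"
    using fe_sym[OF fe_cancel_l[of "p @ c @ ?r @ inv_word c" p "conj_prod ps @ inv_word p"]] x
    by simp
  moreover have "free_eq ((p @ c @ ?r @ inv_word c @ inv_word p) @ (p @ conj_prod ps @ inv_word p))
     ((p @ c @ ?r @ inv_word c @ inv_word p) @ conj_prod (shiftp p ps))"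
    by (rule fe_app[OF fe_refl Cons])
  ultimately have "free_eq (p @ conj_prod (x # ps) @ inv_word p)
     ((p @ c @ ?r @ inv_word c @ inv_word p) @ conj_prod (shiftp p ps))" by (rule fe_trans)
  then show ?case using x by (simp add: shiftp_def)
qed

lemma set_shiftp: "(\<forall>(u, r, e)\<in>set ps. r \<in> A) \<Longrightarrow> (\<forall>(u, r, e)\<in>set (shiftp p ps). r \<in> A)"
  by (auto simp: shiftp_def)

lemma length_shiftp[simp]: "length (shiftp p ps) = length ps"
  by (simp add: shiftp_def)

lemma NR_conj: "NR u \<Longrightarrow> NR (p @ u @ inv_word p)"
  unfolding NR_def null_rep_def
proof (elim exE conjE)
  fix ps
  assume a: "\<forall>(u, r, e)\<in>set ps. r \<in> K_relators" "free_eq u (conj_prod ps)"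
  have "free_eq (p @ u @ inv_word p) (p @ conj_prod ps @ inv_word p)"
    by (rule fe_ctx[OF a(2)])
  then have "free_eq (p @ u @ inv_word p) (conj_prod (shiftp p ps))"
    using conj_shift fe_trans by blast
  then show "\<exists>ps. (\<forall>(u, r, e)\<in>set ps. r \<in> K_relators) \<and> free_eq (p @ u @ inv_word p) (conj_prod ps)"
    using set_shiftp[OF a(1)] by blast
qed

definition flipps :: "(kgen word \<times> kgen word \<times> bool) list \<Rightarrow> (kgen word \<times> kgen word \<times> bool) list" where
  "flipps ps = rev (map (\<lambda>(c, r, e). (c, r, \<not> e)) ps)"

lemma inv_conj_prod: "inv_word (conj_prod ps) = conj_prod (flipps ps)"
proof (induction ps)
  case Nil
  then show ?case by (simp add: flipps_def)
next
  case (Cons x ps)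
  obtain c r e where x: "x = (c, r, e)" by (cases x)
  show ?case using Cons x by (simp add: flipps_def)
qed

lemma set_flipps: "(\<forall>(u, r, e)\<in>set ps. r \<in> A) \<Longrightarrow> (\<forall>(u, r, e)\<in>set (flipps ps). r \<in> A)"
  by (auto simp: flipps_def)

lemma length_flipps[simp]: "length (flipps ps) = length ps"
  by (simp add: flipps_def)

lemma NR_inv: "NR u \<Longrightarrow> NR (inv_word u)"
  unfolding NR_def null_rep_def
proof (elim exE conjE)
  fix ps
  assume a: "\<forall>(u, r, e)\<in>set ps. r \<in> K_relators" "free_eq u (conj_prod ps)"
  have "free_eq (inv_word u) (conj_prod (flipps ps))"
    using fe_inv[OF a(2)] inv_conj_prod by simp
  then show "\<exists>ps. (\<forall>(u, r, e)\<in>set ps. r \<in> K_relators) \<and> free_eq (inv_word u) (conj_prod ps)"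
    using set_flipps[OF a(1)] by blast
qed

lemma NR_rel: "r \<in> K_relators \<Longrightarrow> NR r"
  unfolding NR_def null_rep_def
  by (rule exI[of _ "[([], r, True)]"]) simp

definition eqG :: "kgen word \<Rightarrow> kgen word \<Rightarrow> bool" where
  "eqG u v \<longleftrightarrow> NR (u @ inv_word v)"

lemma eqG_refl: "eqG u u"
  unfolding eqG_def by (rule NR_free[OF NR_Nil fe_sym[OF fe_inv_r]])

lemma eqG_sym: "eqG u v \<Longrightarrow> eqG v u"
  unfolding eqG_def using NR_inv by fastforce

lemma eqG_trans: "eqG u v \<Longrightarrow> eqG v w \<Longrightarrow> eqG u w"
  unfolding eqG_def
proof -
  assume "NR (u @ inv_word v)" "NR (v @ inv_word w)"
  then have "NR ((u @ inv_word v) @ (v @ inv_word w))" by (rule NR_app)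
  moreover have "free_eq (u @ inv_word v @ v @ inv_word w) (u @ inv_word w)"
    by (rule fe_cancel_l)
  ultimately show "NR (u @ inv_word w)" using NR_free by simp
qed

lemma equivp_eqG: "equivp eqG"
  by (rule equivpI) (auto simp: reflp_def symp_def transp_def intro: eqG_refl eqG_sym eqG_trans)

lemma eqG_app: "eqG a b \<Longrightarrow> eqG c d \<Longrightarrow> eqG (a @ c) (b @ d)"
  unfolding eqG_def
proof -
  assume 1: "NR (a @ inv_word b)" and 2: "NR (c @ inv_word d)"
  have "NR (a @ (c @ inv_word d) @ inv_word a)" using NR_conj[OF 2] .
  then have "NR ((a @ (c @ inv_word d) @ inv_word a) @ (a @ inv_word b))" using 1 NR_app by blast
  moreover have "free_eq ((a @ c @ inv_word d) @ inv_word a @ a @ inv_word b) ((a @ c @ inv_word d) @ inv_word b)"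
    by (rule fe_cancel_l)
  ultimately show "NR ((a @ c) @ inv_word (b @ d))" using NR_free by simp
qed

lemma eqG_inv: "eqG a b \<Longrightarrow> eqG (inv_word a) (inv_word b)"
  unfolding eqG_def
proof -
  assume "NR (a @ inv_word b)"
  then have "NR (inv_word (a @ inv_word b))" by (rule NR_inv)
  then have "NR (inv_word a @ (b @ inv_word a) @ inv_word (inv_word a))"
    using NR_conj[of "b @ inv_word a" "inv_word a"] by simp
  moreover have "free_eq (inv_word a @ b @ inv_word a @ a) (inv_word a @ b)"
    using fe_cancel_l[of "inv_word a @ b" a "[]"] by simp
  ultimately show "NR (inv_word a @ inv_word (inv_word b))" using NR_free by simp
qed

quotient_type kg = "kgen word" / eqG
  by (rule equivp_eqG)

instantiation kg :: group_add
begin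

lift_definition zero_kg :: kg is "[]" .

lift_definition plus_kg :: "kg \<Rightarrow> kg \<Rightarrow> kg" is "(@)"
  by (rule eqG_app)

lift_definition uminus_kg :: "kg \<Rightarrow> kg" is inv_word
  by (rule eqG_inv)

lift_definition minus_kg :: "kg \<Rightarrow> kg \<Rightarrow> kg" is "\<lambda>a b. a @ inv_word b"
  by (simp add: eqG_app eqG_inv)

instance
proof
  fix a b c :: kg
  show "a + b + c = a + (b + c)"
    by transfer (simp add: eqG_refl)
  show "0 + a = a"
    by transfer (simp add: eqG_refl)
  show "a + 0 = a"
    by transfer (simp add: eqG_refl)
  show "- a + a = 0"
    by transfer (simp add: eqG_def NR_free[OF NR_Nil] fe_sym fe_inv_l)
  show "a + - b = a - b"
    by transfer (simp add: eqG_refl)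
qed

end

definition cls :: "kgen word \<Rightarrow> kg" where "cls = abs_kg"

lemma cls_app: "cls (u @ v) = cls u + cls v"
  unfolding cls_def by (simp add: plus_kg.abs_eq)

lemma cls_inv: "cls (inv_word u) = - cls u"
  unfolding cls_def by (simp add: uminus_kg.abs_eq)

lemma cls_Nil: "cls [] = 0"
  unfolding cls_def by (simp add: zero_kg.abs_eq)

lemma cls_eq_iff: "cls u = cls v \<longleftrightarrow> eqG u v"
  unfolding cls_def by (simp add: kg.abs_eq_iff)

lemma cls_surj: "\<exists>w. cls w = g"
  unfolding cls_def by (metis Quotient3_abs_rep Quotient3_kg)

lemma cls_zero_iff: "cls w = 0 \<longleftrightarrow> NR w"
  using cls_eq_iff[of w "[]"] by (simp add: cls_Nil eqG_def)

lemma eqG_of_NR: "NR (u @ inv_word v) \<Longrightarrow> cls u = cls v"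
  by (simp add: cls_eq_iff eqG_def)

fun ev :: "(kgen \<Rightarrow> kg) \<Rightarrow> kgen word \<Rightarrow> kg" where
  "ev f [] = 0"
| "ev f (x # w) = (if snd x then f (fst x) else - f (fst x)) + ev f w"

lemma ev_app: "ev f (u @ v) = ev f u + ev f v"
  by (induction u) (simp_all add: add.assoc)

lemma ev_single: "ev f [x] = (if snd x then f (fst x) else - f (fst x))"
  by simp

lemma ev_inv: "ev f (inv_word u) = - ev f u"
  by (induction u) (simp_all add: ev_app flipl_def minus_add)

definition gen :: "kgen \<Rightarrow> kg" where "gen a = cls [(a, True)]"

lemma cls_single: "cls [x] = (if snd x then gen (fst x) else - gen (fst x))"
proof (cases x)
  case (Pair a s)
  show ?thesis
  proof (cases s)
    case True
    then show ?thesis using Pair by (simp add: gen_def)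
  next
    case False
    have "inv_word [(a, True)] = [(a, False)]" by (simp add: flipl_def)
    then have "cls [(a, False)] = - cls [(a, True)]" by (metis cls_inv)
    then show ?thesis using Pair False by (simp add: gen_def)
  qed
qed

lemma cls_Cons: "cls (x # w) = (if snd x then gen (fst x) else - gen (fst x)) + cls w"
  using cls_app[of "[x]" w] cls_single[of x] by simp

lemma cls_ev: "cls w = ev gen w"
  by (induction w) (simp_all add: cls_Nil cls_Cons)

lemma ev_cancel1: "cancel1 u v \<Longrightarrow> ev f u = ev f v"
  unfolding cancel1_def by (auto simp: ev_app add.assoc)

lemma ev_free: "free_eq u v \<Longrightarrow> ev f u = ev f v"
  unfolding free_eq_def
proof (induction rule: rtranclp_induct)
  case base
  then show ?case by simp
next
  case (step y z)
  then show ?case using ev_cancel1 by metis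
qed

lemma ev_conj_prod: "(\<forall>(c, r, e)\<in>set ps. ev f r = 0) \<Longrightarrow> ev f (conj_prod ps) = 0"
proof (induction ps)
  case Nil
  then show ?case by simp
next
  case (Cons x ps)
  obtain c r e where x: "x = (c, r, e)" by (cases x)
  have "ev f r = 0" "ev f (conj_prod ps) = 0" using Cons x by auto
  then show ?case using x by (simp add: ev_app ev_inv)
qed

definition good :: "(kgen \<Rightarrow> kg) \<Rightarrow> bool" where
  "good f \<longleftrightarrow> (\<forall>r\<in>K_relators. ev f r = 0)"

lemma ev_NR: "good f \<Longrightarrow> NR w \<Longrightarrow> ev f w = 0"
  unfolding NR_def null_rep_def good_def
proof (elim exE conjE)
  fix ps
  assume a: "\<forall>r\<in>K_relators. ev f r = 0" "\<forall>(u, r, e)\<in>set ps. r \<in> K_relators" "free_eq w (conj_prod ps)"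
  have "\<forall>(c, r, e)\<in>set ps. ev f r = 0" using a(1,2) by auto
  then have "ev f (conj_prod ps) = 0" by (rule ev_conj_prod)
  then show "ev f w = 0" using ev_free[OF a(3)] by simp
qed

lemma ev_eqG: "good f \<Longrightarrow> eqG u v \<Longrightarrow> ev f u = ev f v"
  unfolding eqG_def
proof -
  assume "good f" "NR (u @ inv_word v)"
  then have "ev f (u @ inv_word v) = 0" by (rule ev_NR)
  then have "ev f u + - ev f v = 0" by (simp add: ev_app ev_inv)
  then show "ev f u = ev f v" by (simp add: add_eq_0_iff2)
qed

definition H :: "(kgen \<Rightarrow> kg) \<Rightarrow> kg \<Rightarrow> kg" where
  "H f g = ev f (SOME w. cls w = g)"

lemma H_cls: "good f \<Longrightarrow> H f (cls w) = ev f w"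
proof -
  assume g: "good f"
  have "cls (SOME w'. cls w' = cls w) = cls w" by (rule someI) simp
  then have "eqG (SOME w'. cls w' = cls w) w" by (simp add: cls_eq_iff)
  then show ?thesis unfolding H_def using ev_eqG[OF g] by blast
qed

lemma H_add: "good f \<Longrightarrow> H f (a + b) = H f a + H f b"
proof -
  assume g: "good f"
  obtain u v where "cls u = a" "cls v = b" using cls_surj by metis
  then show ?thesis using H_cls[OF g] by (metis cls_app ev_app)
qed

lemma H_minus: "good f \<Longrightarrow> H f (- a) = - H f a"
proof -
  assume g: "good f"
  obtain u where "cls u = a" using cls_surj by metis
  then show ?thesis using H_cls[OF g] by (metis cls_inv ev_inv)
qed

lemma H_zero: "good f \<Longrightarrow> H f 0 = 0"
  using H_cls[of f "[]"] by (simp add: cls_Nil)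

lemma H_gen: "good f \<Longrightarrow> H f (gen a) = f a"
  unfolding gen_def by (simp add: H_cls)

definition hsub :: "(kgen \<Rightarrow> kgen word) \<Rightarrow> kgen word \<Rightarrow> kgen word" where
  "hsub s w = concat (map (\<lambda>x. if snd x then s (fst x) else inv_word (s (fst x))) w)"

lemma hsub_Nil[simp]: "hsub s [] = []"
  by (simp add: hsub_def)

lemma hsub_Cons[simp]: "hsub s (x # w) = (if snd x then s (fst x) else inv_word (s (fst x))) @ hsub s w"
  by (simp add: hsub_def)

lemma hsub_app: "hsub s (u @ v) = hsub s u @ hsub s v"
  by (simp add: hsub_def)

lemma ev_hsub: "ev (\<lambda>a. cls (s a)) w = cls (hsub s w)"
  by (induction w) (simp_all add: cls_Nil cls_app cls_inv)

lemma good_hsub: "(\<forall>r\<in>K_relators. NR (hsub s r)) \<Longrightarrow> good (\<lambda>a. cls (s a))"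
  unfolding good_def by (simp add: ev_hsub cls_zero_iff)

lemma H_hsub: "good (\<lambda>a. cls (s a)) \<Longrightarrow> H (\<lambda>a. cls (s a)) (cls w) = cls (hsub s w)"
  by (simp add: H_cls ev_hsub)

definition relws :: "kgen word list" where
  "relws = [comm (gw X1 True) (gw Y1 True), comm (gw X2 True) (gw Y2 True),
    comm (gw X1 True) (gw Y2 True) @ comm (gw X2 True) (gw Y1 True),
    comm (gw X1 True) (gw Y2 False) @ comm (gw X2 False) (gw Y1 True),
    comm (gw X1 False) (gw Y2 True) @ comm (gw X2 True) (gw Y1 False),
    comm (gw X1 False) (gw Y2 False) @ comm (gw X2 False) (gw Y1 False)]"

definition relw :: "nat \<Rightarrow> kgen word" where "relw i = relws ! i"

lemma K_rel_eq: "K_relators = set relws"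
proof
  show "K_relators \<subseteq> set relws"
  proof
    fix r assume "r \<in> K_relators"
    then consider "r = comm (gw X1 True) (gw Y1 True)" | "r = comm (gw X2 True) (gw Y2 True)"
      | e1 e2 where "r = comm (gw X1 e1) (gw Y2 e2) @ comm (gw X2 e2) (gw Y1 e1)"
      unfolding K_relators_def by blast
    then show "r \<in> set relws"
    proof cases
      case (3 e1 e2)
      then show ?thesis unfolding relws_def by (cases e1; cases e2) simp_all
    qed (simp_all add: relws_def)
  qed
next
  have "\<forall>e1 e2. comm (gw X1 e1) (gw Y2 e2) @ comm (gw X2 e2) (gw Y1 e1) \<in> K_relators"
    unfolding K_relators_def by blast
  then show "set relws \<subseteq> K_relators"
    by (simp add: relws_def K_relators_def)
qed

lemma len_relws: "length relws = 6"
  by (simp add: relws_def)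

lemma relw_in: "i < 6 \<Longrightarrow> relw i \<in> K_relators"
  unfolding relw_def K_rel_eq by (rule nth_mem) (simp add: len_relws)

lemma NR_relw: "i < 6 \<Longrightarrow> NR (relw i)"
  by (rule NR_rel[OF relw_in])

lemma all_K_rel: "(\<forall>r\<in>K_relators. P r) \<longleftrightarrow> (\<forall>i<6. P (relw i))"
  unfolding K_rel_eq relw_def all_set_conv_all_nth len_relws ..

lemma NR_check:
  assumes "red w = red (conj_prod (map (\<lambda>(c, i, e). (c, relw i, e)) qs))"
    and "list_all (\<lambda>(c, i, e). i < 6) qs"
  shows "NR w"
  unfolding NR_def null_rep_def
proof (rule exI[of _ "map (\<lambda>(c, i, e). (c, relw i, e)) qs"], rule conjI)
  show "\<forall>(u, r, e)\<in>set (map (\<lambda>(c, i, e). (c, relw i, e)) qs). r \<in> K_relators"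
    using assms(2) relw_in by (auto simp: list_all_iff)
  show "free_eq w (conj_prod (map (\<lambda>(c, i, e). (c, relw i, e)) qs))"
    using assms(1) by (rule fe_by_red)
qed

abbreviation "x1w \<equiv> gw X1 True"
abbreviation "x2w \<equiv> gw X2 True"
abbreviation "y1w \<equiv> gw Y1 True"
abbreviation "y2w \<equiv> gw Y2 True"

definition z1w :: "kgen word" where "z1w = [(Y1, False), (X1, True)]"
definition z2w :: "kgen word" where "z2w = [(Y2, False), (X2, True)]"
definition b0w :: "kgen word" where "b0w = comm [(X1, True)] [(Y2, True)]"

definition sT1 :: "kgen \<Rightarrow> kgen word" where
  "sT1 a = (case a of X1 \<Rightarrow> [(X1,True)] | Y1 \<Rightarrow> [(Y1,True)]
     | X2 \<Rightarrow> [(Y1,True),(X2,True),(Y1,False)] | Y2 \<Rightarrow> [(X1,True),(Y2,True),(X1,False)])"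
definition sT1i :: "kgen \<Rightarrow> kgen word" where
  "sT1i a = (case a of X1 \<Rightarrow> [(X1,True)] | Y1 \<Rightarrow> [(Y1,True)]
     | X2 \<Rightarrow> [(Y1,False),(X2,True),(Y1,True)] | Y2 \<Rightarrow> [(X1,False),(Y2,True),(X1,True)])"
definition sT2 :: "kgen \<Rightarrow> kgen word" where
  "sT2 a = (case a of X2 \<Rightarrow> [(X2,True)] | Y2 \<Rightarrow> [(Y2,True)]
     | X1 \<Rightarrow> [(Y2,True),(X1,True),(Y2,False)] | Y1 \<Rightarrow> [(X2,True),(Y1,True),(X2,False)])"
definition sT2i :: "kgen \<Rightarrow> kgen word" where
  "sT2i a = (case a of X2 \<Rightarrow> [(X2,True)] | Y2 \<Rightarrow> [(Y2,True)]
     | X1 \<Rightarrow> [(Y2,False),(X1,True),(Y2,True)] | Y1 \<Rightarrow> [(X2,False),(Y1,True),(X2,True)])"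
definition sK1 :: "kgen \<Rightarrow> kgen word" where
  "sK1 a = (case a of X1 \<Rightarrow> [(X1,True)] | Y1 \<Rightarrow> [(Y1,True)] | Y2 \<Rightarrow> [(Y2,True)]
     | X2 \<Rightarrow> [(X1,False),(Y1,True),(X2,True),(Y1,False),(X1,True)])"
definition sK2 :: "kgen \<Rightarrow> kgen word" where
  "sK2 a = (case a of X1 \<Rightarrow> [(X1,True)] | X2 \<Rightarrow> [(X2,True)] | Y2 \<Rightarrow> [(Y2,True)]
     | Y1 \<Rightarrow> [(Y2,False),(X2,True),(Y1,True),(X2,False),(Y2,True)])"

lemmas chk_simps = sT1_def sT1i_def sT2_def sT2i_def sK1_def sK2_def relw_def relws_def
  comm_def gw_def flipl_def z1w_def z2w_def b0w_def subst2_def Let_def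


lemma good_sT1_0: "NR (hsub sT1 (relw 0))"
  by (rule NR_check[where qs="[([(X1,True),(Y1,True),(X1,False),(Y1,False)],0,True)]"]) (simp_all add: chk_simps)

lemma good_sT1_1: "NR (hsub sT1 (relw 1))"
  by (rule NR_check[where qs="[([(Y1,True),(X2,True),(Y1,False),(X1,True),(Y2,True),(X1,False),(Y1,True),(X2,False),(Y1,False),(X1,True),(Y2,False),(X1,False),(Y1,True),(X2,True),(Y1,False),(X1,True),(Y2,True),(X1,False)],3,False),([(Y1,True),(X2,True),(Y1,False),(X1,True),(Y2,True),(X1,False),(Y1,True),(X2,False),(Y1,False),(X1,True),(Y2,False),(X1,False)],2,False),([(Y1,True),(X2,True),(Y1,False),(X1,True),(Y2,True),(X1,False),(Y1,True),(X2,False),(Y1,False),(Y2,False)],1,True)]"]) (simp_all add: chk_simps)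

lemma good_sT1_2: "NR (hsub sT1 (relw 2))"
  by (rule NR_check[where qs="[([(X1,True),(X1,True),(Y2,True),(X1,False),(Y2,False),(X1,False),(Y1,True),(X2,True),(Y1,True),(X2,False),(Y1,False)],2,True),([(X1,True),(X1,True),(Y2,True),(X1,False),(Y2,False),(X1,False),(Y1,True),(Y2,True),(X1,True),(Y2,False),(X1,False),(Y1,False)],0,True),([(X1,True),(X1,True),(Y2,True),(X1,False),(Y2,False),(X1,False),(Y1,True),(Y2,True),(X1,True),(Y2,False),(Y1,False)],2,True),([(X1,True),(X1,True),(Y2,True),(X1,False),(Y2,False),(X1,False),(Y1,True),(Y2,True),(X1,True),(Y2,False),(X2,True),(Y1,False),(X2,False),(Y1,True)],4,True),([(X1,True),(X1,True),(Y2,True),(X1,False),(Y2,False),(X1,False),(Y1,True),(X1,True),(Y1,False),(X1,False)],0,False)]"]) (simp_all add: chk_simps)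

lemma good_sT1_3: "NR (hsub sT1 (relw 3))"
  by (rule NR_check[where qs="[([(X1,True),(X1,True),(Y2,False),(X1,False),(Y2,True),(X1,False)],3,False),([(X1,True),(X1,True),(Y2,False),(X1,False),(X1,False),(Y2,True),(X2,False),(Y2,False)],1,True),([(X1,True),(X1,True),(Y2,False),(X1,False),(X1,False),(X2,False),(Y2,True),(Y1,True),(Y1,True),(X2,True),(Y1,False),(Y1,False)],0,True),([(X1,True),(X1,True),(Y2,False),(X1,False),(Y2,True),(X2,False),(Y1,True),(X2,True),(Y1,False)],3,True),([(X1,True),(Y1,True),(X2,False),(Y1,False),(X2,True),(Y2,False),(X1,False),(X2,False),(Y2,True),(Y1,True),(Y1,True),(X2,True),(Y1,False)],3,True),([(X1,True),(Y1,True),(X2,False),(Y1,False),(X2,True),(Y2,False),(X1,False),(X2,False),(Y2,True),(Y1,True),(X2,True),(Y2,False),(X1,True),(Y2,True),(X2,False),(Y1,False),(X2,True),(Y1,True)],5,True),([(X1,True),(Y1,True),(X2,False),(Y1,False),(X2,True),(Y2,False),(X1,False),(X2,False),(Y2,True),(Y1,True),(X2,True),(X1,True),(Y1,False),(X1,False)],0,False),([(X1,True),(Y1,True),(X2,False),(Y1,False),(X2,True),(Y2,False),(X1,False),(Y2,True),(X2,False),(Y1,True),(X2,True),(Y1,False)],3,True),([(X1,True),(Y1,True),(X2,False),(Y1,False),(X2,True),(X1,False),(Y1,True),(X2,False),(Y1,False),(X2,True),(Y2,False),(X2,False)],1,False)]"]) (simp_all add: chk_simps)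

lemma good_sT1_4: "NR (hsub sT1 (relw 4))"
  by (rule NR_check[where qs="[([(Y2,True),(X1,True),(Y2,False),(X1,False)],2,False)]"]) (simp_all add: chk_simps)

lemma good_sT1_5: "NR (hsub sT1 (relw 5))"
  by (rule NR_check[where qs="[([(Y2,False),(X1,True),(Y2,True),(X1,False)],3,False)]"]) (simp_all add: chk_simps)

lemma good_sT1i_0: "NR (hsub sT1i (relw 0))"
  by (rule NR_check[where qs="[([(X1,True),(Y1,True),(X1,False),(Y1,False)],0,True)]"]) (simp_all add: chk_simps)

lemma good_sT1i_1: "NR (hsub sT1i (relw 1))"
  by (rule NR_check[where qs="[([(Y1,False),(X2,True),(Y1,True),(X1,False),(Y2,True),(X1,True),(Y1,False),(X2,False),(Y1,True),(X1,False),(Y2,False),(X1,True),(Y1,False),(X2,True),(Y1,True),(X1,False),(Y2,True),(X1,True)],5,False),([(Y1,False),(X2,True),(Y1,True),(X1,False),(Y2,True),(X1,True),(Y1,False),(X2,False),(Y1,True),(X1,False),(Y2,False),(X1,True)],4,False),([(Y1,False),(X2,True),(Y1,True),(X1,False),(Y2,True),(X1,True),(Y1,False),(X2,False),(Y1,True),(Y2,False)],1,True)]"]) (simp_all add: chk_simps)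

lemma good_sT1i_2: "NR (hsub sT1i (relw 2))"
  by (rule NR_check[where qs="[([(Y2,True),(X1,False),(Y2,False),(X1,True)],4,False)]"]) (simp_all add: chk_simps)

lemma good_sT1i_3: "NR (hsub sT1i (relw 3))"
  by (rule NR_check[where qs="[([(Y2,False),(X1,False),(Y2,True),(X1,True)],5,False)]"]) (simp_all add: chk_simps)

lemma good_sT1i_4: "NR (hsub sT1i (relw 4))"
  by (rule NR_check[where qs="[([(X1,False),(X1,False),(Y2,True),(X1,True),(Y2,False),(X1,True),(Y1,False),(X1,False)],0,False),([(X1,False),(X1,False),(Y2,True),(X1,True),(Y2,False),(Y1,False),(X1,True),(X2,True),(Y1,False),(X2,False),(Y1,True),(Y1,True),(X1,False),(Y1,False)],0,True),([(X1,False),(X1,False),(Y2,True),(X1,True),(Y2,False),(Y1,False),(X1,True),(X2,True),(Y1,False),(X2,False),(Y1,True)],4,True),([(X1,False),(X1,False),(Y2,True),(X1,True),(Y2,False),(Y1,False)],2,True),([(X1,False),(X1,False),(Y2,True),(X1,True),(Y2,False),(X2,True),(Y1,False),(X2,False),(Y1,True)],4,True)]"]) (simp_all add: chk_simps)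

lemma good_sT1i_5: "NR (hsub sT1i (relw 5))"
  by (rule NR_check[where qs="[([(X1,False),(X1,False),(Y2,False),(X1,True),(Y2,True),(X1,True),(Y1,False),(X2,False),(Y1,False),(X2,True),(Y1,True)],5,True),([(X1,False),(X1,False),(Y2,False),(X1,True),(Y2,True),(X1,True),(Y1,False),(Y2,False),(X1,False),(Y2,True),(X1,True),(Y1,True),(X1,False),(Y1,False)],0,True),([(X1,False),(X1,False),(Y2,False),(X1,True),(Y2,True),(X1,True),(Y1,False),(Y2,False),(X1,False),(Y2,True),(Y1,True)],5,True),([(X1,False),(X1,False),(Y2,False),(X1,True),(Y2,True),(X1,True),(Y1,False),(Y2,False),(X1,False),(Y2,True),(X2,False),(Y1,True),(X2,True),(Y1,False)],3,True),([(X1,False),(X1,False),(Y2,False),(X1,True),(Y2,True),(X1,True),(Y1,False),(X1,False),(Y1,True),(X1,True),(Y1,False),(X1,False)],0,False)]"]) (simp_all add: chk_simps)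

lemma good_sT2_0: "NR (hsub sT2 (relw 0))"
  by (rule NR_check[where qs="[([(Y2,True),(X1,True),(Y2,False),(X2,True),(Y1,True),(X2,False),(Y2,True),(X1,False),(Y2,False),(X2,True),(Y1,False),(X2,False),(Y2,True),(X1,True),(Y2,False),(X1,False)],2,False),([(Y2,True),(X1,True),(Y2,False),(X2,True),(Y1,True),(X2,False),(Y2,True),(X1,False),(Y2,False),(X1,True)],4,False),([(Y2,True),(X1,True),(Y2,False),(Y1,True),(X1,False),(Y1,False)],0,True)]"]) (simp_all add: chk_simps)

lemma good_sT2_1: "NR (hsub sT2 (relw 1))"
  by (rule NR_check[where qs="[([(X2,True),(Y2,True),(X2,False),(Y2,False)],1,True)]"]) (simp_all add: chk_simps)

lemma good_sT2_2: "NR (hsub sT2 (relw 2))"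
  by (rule NR_check[where qs="[([(Y2,True),(X1,True),(Y2,True),(X1,False),(Y2,False),(Y2,False),(X2,True),(X2,True),(Y1,True),(X2,False),(Y1,False)],2,True),([(Y2,True),(X1,True),(Y2,True),(X1,False),(Y2,False),(Y2,False)],1,True),([(Y2,True),(X1,True),(Y2,True),(X1,False),(Y2,False),(X2,True),(X1,True),(Y2,False),(X1,False),(X2,False),(Y2,True),(X1,True),(Y2,True),(X1,False),(Y2,False),(X2,True),(Y1,True),(X2,False),(Y1,False)],2,True),([(Y2,True),(X1,True),(Y2,True),(X1,False),(Y2,False),(X2,True),(X1,True),(Y2,False),(X1,False),(Y2,True),(X2,False),(Y1,True),(X2,True),(Y1,False)],3,True),([(Y2,True),(X1,True),(Y2,True),(X1,False),(Y2,False),(X2,True),(Y1,True),(X2,False),(Y1,False),(X2,True),(Y2,False),(X2,False)],1,False)]"]) (simp_all add: chk_simps)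

lemma good_sT2_3: "NR (hsub sT2 (relw 3))"
  by (rule NR_check[where qs="[([(Y2,True),(X1,True),(Y2,False),(X1,False)],2,False)]"]) (simp_all add: chk_simps)

lemma good_sT2_4: "NR (hsub sT2 (relw 4))"
  by (rule NR_check[where qs="[([(Y2,True),(X1,False),(Y2,True),(X1,True),(Y2,False),(Y2,False),(X2,True),(X2,True),(Y1,False),(X2,False),(Y1,True)],4,True),([(Y2,True),(X1,False),(Y2,True),(X1,True),(Y2,False),(Y2,False)],1,True),([(Y2,True),(X1,False),(Y2,True),(X1,True),(Y2,False),(X2,True),(X1,False),(Y2,False),(X1,True),(X2,False),(Y2,True),(X1,False),(Y2,True),(X1,True),(Y2,False),(X2,True),(Y1,False),(X2,False),(Y1,True)],4,True),([(Y2,True),(X1,False),(Y2,True),(X1,True),(Y2,False),(X2,True),(X1,False),(Y2,False),(X1,True),(Y2,True),(X2,False),(Y1,False),(X2,True),(Y1,True)],5,True),([(Y2,True),(X1,False),(Y2,True),(X1,True),(Y2,False),(X2,True),(Y1,False),(X2,False),(Y1,True),(X2,True),(Y2,False),(X2,False)],1,False)]"]) (simp_all add: chk_simps)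

lemma good_sT2_5: "NR (hsub sT2 (relw 5))"
  by (rule NR_check[where qs="[([(Y2,True),(X1,False),(Y2,False),(X1,True)],4,False)]"]) (simp_all add: chk_simps)

lemma good_sT2i_0: "NR (hsub sT2i (relw 0))"
  by (rule NR_check[where qs="[([(Y2,False),(X1,True),(Y2,True),(X2,False),(Y1,True),(X2,True),(Y2,False),(X1,False),(Y2,True),(X2,False),(Y1,False),(X2,True),(Y2,False),(X1,True),(Y2,True),(X1,False)],3,False),([(Y2,False),(X1,True),(Y2,True),(X2,False),(Y1,True),(X2,True),(Y2,False),(X1,False),(Y2,True),(X1,True)],5,False),([(Y2,False),(X1,True),(Y2,True),(Y1,True),(X1,False),(Y1,False)],0,True)]"]) (simp_all add: chk_simps)

lemma good_sT2i_1: "NR (hsub sT2i (relw 1))"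
  by (rule NR_check[where qs="[([(X2,True),(Y2,True),(X2,False),(Y2,False)],1,True)]"]) (simp_all add: chk_simps)

lemma good_sT2i_2: "NR (hsub sT2i (relw 2))"
  by (rule NR_check[where qs="[([(Y2,False),(X1,True),(Y2,True),(X1,False)],3,False)]"]) (simp_all add: chk_simps)

lemma good_sT2i_3: "NR (hsub sT2i (relw 3))"
  by (rule NR_check[where qs="[([(Y2,False),(X1,True),(Y2,False),(X1,False),(Y2,True),(Y2,True),(X2,False),(X2,False),(Y1,True),(X2,True),(Y1,False),(X2,True),(Y2,False),(X1,True),(Y2,True),(X1,False)],3,False),([(Y2,False),(X1,True),(Y2,False),(X1,False),(Y2,True),(Y2,True),(X2,False),(X2,False),(Y1,True),(X2,True),(X2,True),(Y1,False),(X1,True),(Y2,False),(Y2,False),(X1,False),(Y2,True),(Y2,True),(X2,False),(Y2,False)],1,True),([(Y2,False),(X1,True),(Y2,False),(X1,False),(Y2,True),(Y2,True),(X2,False),(X2,False),(Y1,True),(X2,True),(X2,True),(Y1,False),(X1,True),(Y2,False),(Y2,False),(X1,False),(Y2,True),(X2,False),(Y2,False)],1,True),([(Y2,False),(X1,True),(Y2,False),(X1,False),(Y2,True),(Y2,True),(X2,False),(X2,False),(Y1,True),(X2,True),(X2,True),(Y1,False),(X1,True),(Y2,False),(Y2,False),(X1,False),(X2,False),(Y2,True),(Y2,True),(X2,False),(Y1,True),(X2,True),(Y1,False)],3,True),([(Y2,False),(X1,True),(Y2,False),(X1,False),(Y2,True),(Y2,True),(X2,False),(X2,False),(Y1,T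rue),(X2,True),(X2,True),(Y1,False),(X1,True),(Y2,False),(X1,False),(Y2,True),(X2,False),(Y1,True),(X2,True),(Y1,False)],3,True),([(Y2,False),(X1,True),(Y2,False),(X1,False),(Y2,True),(Y2,True),(X2,False),(X2,False),(Y1,True),(X2,True),(Y1,False),(X2,True),(Y2,False),(X1,True),(Y2,False),(X1,False),(X2,False),(Y2,True),(X1,True),(Y2,True),(X1,False),(X2,True),(Y2,False),(X2,False)],1,False),([(Y2,False),(X1,True),(Y2,False),(X1,False),(Y2,True),(Y2,True),(X2,False),(X2,False),(Y1,True),(X2,True),(Y1,False),(X2,True),(Y2,False),(X1,True),(Y2,False),(X1,False),(X2,False),(Y2,True),(X1,True),(Y2,True),(X1,False),(Y2,False),(X2,True),(Y1,True),(X2,False),(Y1,False)],2,True),([(Y2,False),(X1,True),(Y2,False),(X1,False),(Y2,True),(Y2,True),(X2,False),(X2,False),(Y1,True),(X2,True),(Y1,False),(X2,True),(Y2,False),(X1,True),(Y2,False),(X1,False),(Y2,True),(X2,False),(Y1,True),(X2,True),(Y1,False)],3,True),([(Y2,False),(X1,True),(Y2,False),(X1,False),(Y2,True),(Y2,True),(X2,False),(X2,False),(Y1,True),(X2,True),(Y1,False),(X2,True),(Y2,False),(Y1,True),(X2,False),(Y1,False),(X2,True),(Y2,False),(X2,False)],1,False)]"]) (simp_all add: chk_simps)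

lemma good_sT2i_4: "NR (hsub sT2i (relw 4))"
  by (rule NR_check[where qs="[([(Y2,False),(X1,False),(Y2,True),(X1,True)],5,False)]"]) (simp_all add: chk_simps)

lemma good_sT2i_5: "NR (hsub sT2i (relw 5))"
  by (rule NR_check[where qs="[([(Y2,False),(X1,False),(Y2,True),(X1,True)],5,False),([(X2,False),(Y1,False),(X2,True),(Y1,True),(X1,False),(Y2,False),(Y2,False),(X1,True),(Y2,True),(Y2,True),(X2,False),(Y2,False)],1,True),([(X2,False),(Y1,False),(X2,True),(Y1,True),(X1,False),(Y2,False),(Y2,False),(X1,True),(Y2,True),(X2,False),(Y2,False)],1,True),([(X2,False),(Y1,False),(X2,True),(Y1,True),(X1,False),(Y2,False),(Y2,False),(X1,True),(X2,False),(Y2,True),(Y2,True),(X2,False),(Y1,False),(X2,True),(Y1,True)],5,True),([(X2,False),(Y1,False),(X2,True),(Y1,True),(X1,False),(Y2,False),(X1,True),(Y2,True),(X2,False),(Y1,False),(X2,True),(Y1,True)],5,True),([(Y2,False),(X1,False),(Y2,False),(X1,True),(X2,False)],1,False),([(Y2,False),(X1,False),(Y2,False),(X1,True),(Y2,True),(X2,False),(Y1,False),(X2,True),(Y1,True)],5,True),([(Y2,False),(Y1,False),(X2,False),(Y1,True)],4,True),([(Y2,False),(X2,False)],1,False)]"]) (simp_all add: chk_simps)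

lemma good_sK1_0: "NR (hsub sK1 (relw 0))"
  by (rule NR_check[where qs="[([(X1,True),(Y1,True),(X1,False),(Y1,False)],0,True)]"]) (simp_all add: chk_simps)

lemma good_sK1_1: "NR (hsub sK1 (relw 1))"
  by (rule NR_check[where qs="[([(X1,False),(Y1,True),(X2,True),(Y1,False),(X1,True),(Y2,True),(X1,False),(Y1,True),(X2,False),(Y1,False),(X1,True),(Y2,False),(X1,False),(Y1,True),(X2,True),(Y1,False),(X1,True),(Y2,True),(X1,False)],3,False),([(X1,False),(Y1,True),(X2,True),(Y1,False),(X1,True),(Y2,True),(X1,False),(Y1,True),(X2,False),(Y1,False),(X1,True),(Y2,False),(X1,False)],2,False),([(X1,False),(Y1,True),(X2,True),(Y1,False),(X1,True),(Y2,True),(X1,False),(Y1,True),(X2,False),(Y1,False),(Y2,False)],1,True)]"]) (simp_all add: chk_simps)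

lemma good_sK1_2: "NR (hsub sK1 (relw 2))"
  by (rule NR_check[where qs="[([(X1,True),(Y2,True),(X1,False),(Y2,False),(X1,False),(Y1,True),(X2,True),(Y1,False)],0,True),([(X1,True),(Y2,True),(X1,False),(Y2,False),(X1,False),(Y1,True),(X2,True),(Y1,True),(X2,False),(Y1,False)],2,True),([(X1,True),(Y2,True),(X1,False),(Y2,False),(X1,False),(Y1,True),(Y2,True),(X1,True),(Y2,False),(Y1,False)],2,True),([(X1,True),(Y2,True),(X1,False),(Y2,False),(X1,False),(Y1,True),(Y2,True),(X1,True),(Y2,False),(X2,True),(Y1,False),(X2,False),(Y1,True)],4,True),([(X1,True),(Y2,True),(X1,False),(Y2,False),(X1,False),(Y1,True),(X1,True),(Y1,False),(X1,False)],0,False)]"]) (simp_all add: chk_simps)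

lemma good_sK1_3: "NR (hsub sK1 (relw 3))"
  by (rule NR_check[where qs="[([(X1,True),(Y2,False),(X1,False),(Y2,True),(X1,False),(Y1,True),(X2,False),(Y1,False)],0,True),([(X1,True),(Y2,False),(X1,False),(Y2,True),(X1,False),(Y1,True),(X2,False),(Y1,True),(X2,True),(Y1,False)],3,True),([(X1,True),(Y2,False),(X1,False),(Y2,True),(X2,False),(Y1,True),(X2,True),(Y1,False)],3,True),([(Y1,True),(X2,False),(Y1,False),(X2,True),(X1,False),(Y1,True),(Y2,False),(X1,True),(Y2,True),(X2,False),(Y1,False),(X2,True),(Y1,True)],5,True),([(Y1,True),(X2,False),(Y1,False),(X2,True),(X1,False),(Y1,True),(X1,True),(Y1,False),(X1,False)],0,False)]"]) (simp_all add: chk_simps)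

lemma good_sK1_4: "NR (hsub sK1 (relw 4))"
  by (rule NR_check[where qs="[([(X1,False),(Y2,True),(X1,True),(Y2,False),(X1,False)],2,False),([(X1,False),(X2,True),(X1,True),(Y1,False),(X1,False),(Y1,True),(X2,False),(Y1,False)],0,True),([(X1,False),(X2,True),(X1,True),(Y1,False),(X1,False)],0,False)]"]) (simp_all add: chk_simps)

lemma good_sK1_5: "NR (hsub sK1 (relw 5))"
  by (rule NR_check[where qs="[([(X1,False),(Y2,False),(X1,True),(Y2,True),(X1,False)],3,False),([(X1,False),(X2,False),(X1,True),(Y1,False),(X1,False),(Y1,True),(X2,True),(Y1,False)],0,True),([(X1,False),(X2,False),(X1,True),(Y1,False),(X1,False)],0,False)]"]) (simp_all add: chk_simps)

lemma good_sK2_0: "NR (hsub sK2 (relw 0))"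
  by (rule NR_check[where qs="[([(X1,True),(Y2,False),(X2,True),(Y1,True),(X2,False),(Y2,True),(X1,False),(Y2,False),(X2,True),(Y1,False),(X2,False),(Y2,True),(X1,True),(Y2,False),(X1,False)],2,False),([(X1,True),(Y2,False),(X2,True),(Y1,True),(X2,False),(Y2,True),(X1,False),(Y2,False),(X1,True)],4,False),([(X1,True),(Y2,False),(Y1,True),(X1,False),(Y1,False)],0,True)]"]) (simp_all add: chk_simps)

lemma good_sK2_1: "NR (hsub sK2 (relw 1))"
  by (rule NR_check[where qs="[([(X2,True),(Y2,True),(X2,False),(Y2,False)],1,True)]"]) (simp_all add: chk_simps)

lemma good_sK2_2: "NR (hsub sK2 (relw 2))"
  by (rule NR_check[where qs="[([(X1,True),(Y2,True),(X1,False),(Y2,False),(X2,True),(Y2,False),(X2,True),(Y1,True),(X2,False),(Y2,True),(X2,False),(Y2,False)],1,True),([(X1,True),(Y2,True),(X1,False),(Y2,False),(X2,True),(Y2,False),(X2,True),(Y1,True),(X2,False),(Y1,False)],2,True),([(X1,True),(Y2,True),(X1,False),(Y2,False),(X2,True),(X1,True),(Y2,False),(X1,False),(X2,False),(Y2,True),(X1,True),(Y2,True),(X1,False),(Y2,False),(X2,True),(Y1,True),(X2,False),(Y1,False)],2,True),([(X1,True),(Y2,True),(X1,False),(Y2,False),(X2,True),(X1,True),(Y2,False),(X1,False),(Y2,True),(X2,False),(Y1,True),(X2,True),(Y1,False)],3,True),([(X1,True),(Y2,True),(X1,False),(Y2,False),(X2,True),(Y1,True),(X2,False),(Y1,False),(X2,True),(Y2,False),(X2,False)],1,False)]"])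 (simp_all add: chk_simps)

lemma good_sK2_3: "NR (hsub sK2 (relw 3))"
  by (rule NR_check[where qs="[([(X1,True),(Y2,False),(X1,False)],2,False),([(Y2,False),(X2,True),(Y1,True),(X2,False),(Y1,False),(Y2,True),(X2,False),(Y2,False),(X2,True),(Y1,True),(X2,False),(Y2,True),(X2,True),(Y2,False),(Y1,False),(Y2,True),(X2,False),(Y2,False)],1,True),([(Y2,False),(X2,True),(Y1,True),(X2,False),(Y1,False),(Y2,True),(X2,False),(Y2,False),(X2,True),(Y1,True),(X2,False),(Y2,True),(X2,True),(Y2,False),(X2,False)],1,False)]"]) (simp_all add: chk_simps)

lemma good_sK2_4: "NR (hsub sK2 (relw 4))"
  by (rule NR_check[where qs="[([(X1,False),(Y2,True),(X1,True),(Y2,False),(X2,True),(Y2,False),(X2,True),(Y1,False),(X2,False),(Y2,True),(X2,False),(Y2,False)],1,True),([(X1,False),(Y2,True),(X1,True),(Y2,False),(X2,True),(Y2,False),(X2,True),(Y1,False),(X2,False),(Y1,True)],4,True),([(X1,False),(Y2,True),(X1,True),(Y2,False),(X2,True),(X1,False),(Y2,False),(X1,True),(X2,False),(Y2,True),(X1,False),(Y2,True),(X1,True),(Y2,False),(X2,True),(Y1,False),(X2,False),(Y1,True)],4,True),([(X1,False),(Y2,True),(X1,True),(Y2,False),(X2,True),(X1,False),(Y2,False),(X1,True),(Y2,True),(X2,False),(Y1,False),(X2,True),(Y1,True)],5,True),([(X1,False),(Y2,True),(X1,True),(Y2,False),(X2,True),(Y1,False),(X2,False),(Y1,True),(X2,True),(Y2,False),(X2,False)],1,False)]"])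 (simp_all add: chk_simps)

lemma good_sK2_5: "NR (hsub sK2 (relw 5))"
  by (rule NR_check[where qs="[([(X1,False),(Y2,False),(X1,True)],4,False),([(Y2,False),(X2,True),(Y1,False),(X2,False),(Y1,True),(Y2,True),(X2,False),(Y2,False)],1,True),([(Y2,False),(X2,True),(Y1,False),(X2,False),(X2,False),(Y2,True),(X2,True),(Y2,False),(X2,False)],1,False)]"]) (simp_all add: chk_simps)

lemma zfix_sT1_z1w: "NR (hsub sT1 z1w @ inv_word z1w)"
  by (rule NR_check[where qs="[]"]) (simp_all add: chk_simps)

lemma zfix_sT1_z2w: "NR (hsub sT1 z2w @ inv_word z2w)"
  by (rule NR_check[where qs="[([(X1,True),(Y2,False),(X1,False)],2,False)]"]) (simp_all add: chk_simps)

lemma zfix_sT1i_z1w: "NR (hsub sT1i z1w @ inv_word z1w)"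
  by (rule NR_check[where qs="[]"]) (simp_all add: chk_simps)

lemma zfix_sT1i_z2w: "NR (hsub sT1i z2w @ inv_word z2w)"
  by (rule NR_check[where qs="[([(X1,False),(Y2,False),(X1,True)],4,False)]"]) (simp_all add: chk_simps)

lemma zfix_sT2_z1w: "NR (hsub sT2 z1w @ inv_word z1w)"
  by (rule NR_check[where qs="[([(X2,True),(Y1,False),(X2,False),(Y2,True),(X1,True),(Y2,False),(X1,False)],2,False)]"]) (simp_all add: chk_simps)

lemma zfix_sT2_z2w: "NR (hsub sT2 z2w @ inv_word z2w)"
  by (rule NR_check[where qs="[]"]) (simp_all add: chk_simps)

lemma zfix_sT2i_z1w: "NR (hsub sT2i z1w @ inv_word z1w)"
  by (rule NR_check[where qs="[([(X2,False),(Y1,False),(X2,True),(Y2,False),(X1,True),(Y2,True),(X1,False)],3,False)]"]) (simp_all add: chk_simps)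

lemma zfix_sT2i_z2w: "NR (hsub sT2i z2w @ inv_word z2w)"
  by (rule NR_check[where qs="[]"]) (simp_all add: chk_simps)

lemma kt_sK1_sT1_X1: "NR (hsub sK1 (sT1 X1) @ inv_word (hsub sT1 (sK1 X1)))"
  by (rule NR_check[where qs="[]"]) (simp_all add: chk_simps)

lemma kt_sK1_sT1_X2: "NR (hsub sK1 (sT1 X2) @ inv_word (hsub sT1 (sK1 X2)))"
  by (rule NR_check[where qs="[([(Y1,True),(X1,False),(Y1,True),(X2,True),(Y1,False),(X1,True),(Y1,False),(X1,False),(Y1,True),(Y1,True),(X2,False),(Y1,False),(Y1,False)],0,True),([(Y1,True),(X1,False),(Y1,True),(X2,True),(Y1,False),(X1,True),(Y1,False),(X1,False),(Y1,True),(X1,True),(Y1,False),(X1,False)],0,False)]"]) (simp_all add: chk_simps)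

lemma kt_sK1_sT1_Y1: "NR (hsub sK1 (sT1 Y1) @ inv_word (hsub sT1 (sK1 Y1)))"
  by (rule NR_check[where qs="[]"]) (simp_all add: chk_simps)

lemma kt_sK1_sT1_Y2: "NR (hsub sK1 (sT1 Y2) @ inv_word (hsub sT1 (sK1 Y2)))"
  by (rule NR_check[where qs="[]"]) (simp_all add: chk_simps)

lemma kt_sK1_sT1i_X1: "NR (hsub sK1 (sT1i X1) @ inv_word (hsub sT1i (sK1 X1)))"
  by (rule NR_check[where qs="[]"]) (simp_all add: chk_simps)

lemma kt_sK1_sT1i_X2: "NR (hsub sK1 (sT1i X2) @ inv_word (hsub sT1i (sK1 X2)))"
  by (rule NR_check[where qs="[([(Y1,False),(X1,False),(Y1,True),(X2,True),(Y1,False)],0,True),([(Y1,False),(X1,False)],0,False)]"]) (simp_all add: chk_simps)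

lemma kt_sK1_sT1i_Y1: "NR (hsub sK1 (sT1i Y1) @ inv_word (hsub sT1i (sK1 Y1)))"
  by (rule NR_check[where qs="[]"]) (simp_all add: chk_simps)

lemma kt_sK1_sT1i_Y2: "NR (hsub sK1 (sT1i Y2) @ inv_word (hsub sT1i (sK1 Y2)))"
  by (rule NR_check[where qs="[]"]) (simp_all add: chk_simps)

lemma kt_sK1_sT2_X1: "NR (hsub sK1 (sT2 X1) @ inv_word (hsub sT2 (sK1 X1)))"
  by (rule NR_check[where qs="[]"]) (simp_all add: chk_simps)

lemma kt_sK1_sT2_X2: "NR (hsub sK1 (sT2 X2) @ inv_word (hsub sT2 (sK1 X2)))"
  by (rule NR_check[where qs="[([(X1,False),(Y1,True),(X2,True),(Y1,False),(X1,True),(Y2,True),(X1,False),(Y2,False),(X2,True),(Y1,True),(X2,False),(Y1,False),(X2,False),(Y2,True),(X1,True),(Y2,False),(X1,False),(Y1,True),(X2,True),(Y1,False)],2,True),([(X1,False),(Y1,True),(X2,True),(Y1,False),(X1,True),(Y2,True),(X1,False),(Y2,False),(X2,True),(Y1,True),(X2,False),(Y1,False),(X2,False),(Y2,True),(X1,True),(Y2,False),(X1,False)],2,False)]"]) (simp_all add: chk_simps)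

lemma kt_sK1_sT2_Y1: "NR (hsub sK1 (sT2 Y1) @ inv_word (hsub sT2 (sK1 Y1)))"
  by (rule NR_check[where qs="[([(X1,False),(Y1,True),(X2,True),(Y1,False),(X1,True),(Y1,True),(X1,False),(Y1,True),(X2,False),(Y1,False),(X1,True),(X2,True),(Y1,False),(X2,False),(X1,False),(Y1,True),(X2,True),(Y1,False)],0,True),([(X1,False),(Y1,True),(X2,True),(Y1,False),(X1,True),(Y1,True),(X1,False),(Y1,True),(X2,False),(Y1,False),(X1,True),(X2,True),(Y1,False),(X2,False),(X1,False),(Y1,True),(X2,True),(Y1,True),(X2,False),(Y1,False)],2,True),([(X1,False),(Y1,True),(X2,True),(Y1,False),(X1,True),(Y1,True),(X1,False),(Y1,True),(X2,False),(Y1,False),(X1,True),(X2,True),(Y1,False),(X2,False),(X1,False),(Y1,True),(Y2,True),(X1,True),(Y2,False),(X2,True),(Y1,False),(X2,False),(Y1,True)],4,True),([(X1,False),(Y1,True),(X2,True),(Y1,False),(X1,True),(Y1,True),(X1,False),(Y1,True),(X2,False),(Y1,False),(X1,True),(X2,True),(Y1,False),(X2,False),(X1,False),(Y1,True),(X1,True),(Y1,False),(X1,False)],0,False)]"]) (simp_all add: chk_simps)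

lemma kt_sK1_sT2_Y2: "NR (hsub sK1 (sT2 Y2) @ inv_word (hsub sT2 (sK1 Y2)))"
  by (rule NR_check[where qs="[]"]) (simp_all add: chk_simps)

lemma kt_sK1_sT2i_X1: "NR (hsub sK1 (sT2i X1) @ inv_word (hsub sT2i (sK1 X1)))"
  by (rule NR_check[where qs="[]"]) (simp_all add: chk_simps)

lemma kt_sK1_sT2i_X2: "NR (hsub sK1 (sT2i X2) @ inv_word (hsub sT2i (sK1 X2)))"
  by (rule NR_check[where qs="[([(X1,False),(Y1,True),(X2,True),(Y1,False),(X1,True),(Y2,False),(X1,False),(Y2,True),(X2,False),(Y1,True),(X2,False),(Y1,False),(X2,True),(Y2,False),(X1,True),(Y2,True),(X1,False)],3,False),([(X1,False),(Y1,True),(X2,True),(Y1,False),(X1,True),(Y2,False),(X1,False),(Y2,True),(X2,False),(Y1,True),(X2,True),(Y1,False)],3,True)]"]) (simp_all add: chk_simps)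

lemma kt_sK1_sT2i_Y1: "NR (hsub sK1 (sT2i Y1) @ inv_word (hsub sT2i (sK1 Y1)))"
  by (rule NR_check[where qs="[([(X1,False),(Y1,True),(X2,False),(Y1,False),(X1,True),(Y1,True),(X1,False),(Y1,True),(X2,True),(Y1,False),(X1,True),(X2,False),(Y1,False),(X2,True),(X1,False),(Y1,True),(X2,False),(Y1,False)],0,True),([(X1,False),(Y1,True),(X2,False),(Y1,False),(X1,True),(Y1,True),(X1,False),(Y1,True),(X2,True),(Y1,False)],3,True),([(X1,False),(Y1,True),(X2,False),(Y1,False),(X1,True),(Y1,True),(X1,False),(X2,True),(Y2,False),(X1,True),(Y2,True),(X2,False),(Y1,False),(X2,True),(Y1,True)],5,True),([(X1,False),(Y1,True),(X2,False),(Y1,False),(X1,True),(Y1,True),(X1,False),(X2,True),(X1,True),(Y1,False),(X1,False)],0,False)]"]) (simp_all add: chk_simps)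

lemma kt_sK1_sT2i_Y2: "NR (hsub sK1 (sT2i Y2) @ inv_word (hsub sT2i (sK1 Y2)))"
  by (rule NR_check[where qs="[]"]) (simp_all add: chk_simps)

lemma kt_sK2_sT1_X1: "NR (hsub sK2 (sT1 X1) @ inv_word (hsub sT1 (sK2 X1)))"
  by (rule NR_check[where qs="[]"]) (simp_all add: chk_simps)

lemma kt_sK2_sT1_X2: "NR (hsub sK2 (sT1 X2) @ inv_word (hsub sT1 (sK2 X2)))"
  by (rule NR_check[where qs="[([(Y2,False),(X2,True),(Y1,True),(X2,False),(Y2,True),(X2,True),(Y2,False),(X2,False)],1,False),([(Y2,False),(X2,True),(Y1,True),(X2,True),(Y1,False),(X2,False),(Y2,True),(Y1,True),(X2,False),(Y1,False),(Y2,False),(X2,True),(Y1,True),(X2,True),(Y1,False),(X2,False),(Y2,True),(X1,True),(Y2,False),(X1,False)],2,False),([(Y2,False),(X2,True),(Y1,True),(X2,True),(Y1,False),(X2,False),(Y2,True),(Y1,True),(X2,False),(Y1,False),(Y2,False),(X2,True),(X1,True),(Y2,True),(X1,False)],3,False),([(Y2,False),(X2,True),(Y1,True),(X2,True),(Y1,False),(X2,False),(Y2,True),(Y1,True),(X2,False),(Y1,False),(Y2,False)],1,True)]"]) (simp_all add: chk_simps)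

lemma kt_sK2_sT1_Y1: "NR (hsub sK2 (sT1 Y1) @ inv_word (hsub sT1 (sK2 Y1)))"
  by (rule NR_check[where qs="[([(Y2,False),(X2,True),(Y1,True),(X2,False),(Y2,True),(X1,True),(Y2,False),(X1,False),(Y1,True),(X2,True),(Y1,False),(X2,False),(Y1,False)],2,True),([(Y2,False),(X2,True),(Y1,True),(X2,False),(Y2,True),(X1,True),(Y2,False),(X1,False)],2,False)]"]) (simp_all add: chk_simps)

lemma kt_sK2_sT1_Y2: "NR (hsub sK2 (sT1 Y2) @ inv_word (hsub sT1 (sK2 Y2)))"
  by (rule NR_check[where qs="[]"]) (simp_all add: chk_simps)

lemma kt_sK2_sT1i_X1: "NR (hsub sK2 (sT1i X1) @ inv_word (hsub sT1i (sK2 X1)))"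
  by (rule NR_check[where qs="[]"]) (simp_all add: chk_simps)

lemma kt_sK2_sT1i_X2: "NR (hsub sK2 (sT1i X2) @ inv_word (hsub sT1i (sK2 X2)))"
  by (rule NR_check[where qs="[([(Y2,False),(X2,True),(Y1,False),(X2,False)],1,False),([(Y2,False),(X2,True),(Y1,False),(X2,True),(Y1,True),(X2,False),(Y2,True),(X1,False),(Y2,False),(X1,True)],4,False),([(Y2,False),(X2,True),(X1,False),(Y2,True),(X1,True)],5,False),([(Y2,False)],1,True)]"]) (simp_all add: chk_simps)

lemma kt_sK2_sT1i_Y1: "NR (hsub sK2 (sT1i Y1) @ inv_word (hsub sT1i (sK2 Y1)))"
  by (rule NR_check[where qs="[([(Y2,False),(X2,True),(Y1,True),(X2,False),(Y2,True),(X1,False),(Y2,False),(X1,True),(Y1,False),(X2,True),(Y1,False),(X2,False),(Y1,True)],4,True),([(Y2,False),(X2,True),(Y1,True),(X2,False),(Y2,True),(X1,False),(Y2,False),(X1,True)],4,False)]"]) (simp_all add: chk_simps)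

lemma kt_sK2_sT1i_Y2: "NR (hsub sK2 (sT1i Y2) @ inv_word (hsub sT1i (sK2 Y2)))"
  by (rule NR_check[where qs="[]"]) (simp_all add: chk_simps)

lemma kt_sK2_sT2_X1: "NR (hsub sK2 (sT2 X1) @ inv_word (hsub sT2 (sK2 X1)))"
  by (rule NR_check[where qs="[]"]) (simp_all add: chk_simps)

lemma kt_sK2_sT2_X2: "NR (hsub sK2 (sT2 X2) @ inv_word (hsub sT2 (sK2 X2)))"
  by (rule NR_check[where qs="[]"]) (simp_all add: chk_simps)

lemma kt_sK2_sT2_Y1: "NR (hsub sK2 (sT2 Y1) @ inv_word (hsub sT2 (sK2 Y1)))"
  by (rule NR_check[where qs="[([(X2,True),(Y2,False),(X2,True),(Y1,True),(X2,False),(Y2,True),(X2,False),(Y2,False)],1,True),([(X2,True),(Y2,False),(X2,False),(Y2,True),(X2,True),(Y2,False),(X2,False)],1,False)]"]) (simp_all add: chk_simps)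

lemma kt_sK2_sT2_Y2: "NR (hsub sK2 (sT2 Y2) @ inv_word (hsub sT2 (sK2 Y2)))"
  by (rule NR_check[where qs="[]"]) (simp_all add: chk_simps)

lemma kt_sK2_sT2i_X1: "NR (hsub sK2 (sT2i X1) @ inv_word (hsub sT2i (sK2 X1)))"
  by (rule NR_check[where qs="[]"]) (simp_all add: chk_simps)

lemma kt_sK2_sT2i_X2: "NR (hsub sK2 (sT2i X2) @ inv_word (hsub sT2i (sK2 X2)))"
  by (rule NR_check[where qs="[]"]) (simp_all add: chk_simps)

lemma kt_sK2_sT2i_Y1: "NR (hsub sK2 (sT2i Y1) @ inv_word (hsub sT2i (sK2 Y1)))"
  by (rule NR_check[where qs="[([(X2,False),(Y2,False),(X2,True),(Y1,True),(X2,False),(Y2,True),(X2,True),(Y2,False),(Y1,False),(Y2,True),(X2,False),(Y2,False)],1,True),([(X2,False),(Y2,False),(X2,True),(Y1,True),(X2,False),(Y2,True),(X2,True),(Y2,False),(X2,False)],1,False)]"]) (simp_all add: chk_simps)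

lemma kt_sK2_sT2i_Y2: "NR (hsub sK2 (sT2i Y2) @ inv_word (hsub sT2i (sK2 Y2)))"
  by (rule NR_check[where qs="[]"]) (simp_all add: chk_simps)

lemma tk1_X1: "NR (sT1 X1 @ inv_word ([(X1,True)] @ sK1 X1 @ inv_word [(X1,True)]))"
  by (rule NR_check[where qs="[]"]) (simp_all add: chk_simps)

lemma tk2_X1: "NR (sT2 X1 @ inv_word ([(Y2,True)] @ sK2 X1 @ inv_word [(Y2,True)]))"
  by (rule NR_check[where qs="[]"]) (simp_all add: chk_simps)

lemma tti1_X1: "NR (hsub sT1 (sT1i X1) @ inv_word [(X1,True)])"
  by (rule NR_check[where qs="[]"]) (simp_all add: chk_simps)

lemma tti2_X1: "NR (hsub sT2 (sT2i X1) @ inv_word [(X1,True)])"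
  by (rule NR_check[where qs="[]"]) (simp_all add: chk_simps)

lemma tk1_X2: "NR (sT1 X2 @ inv_word ([(X1,True)] @ sK1 X2 @ inv_word [(X1,True)]))"
  by (rule NR_check[where qs="[]"]) (simp_all add: chk_simps)

lemma tk2_X2: "NR (sT2 X2 @ inv_word ([(Y2,True)] @ sK2 X2 @ inv_word [(Y2,True)]))"
  by (rule NR_check[where qs="[([(X2,True),(Y2,True),(X2,False),(Y2,False)],1,True)]"]) (simp_all add: chk_simps)

lemma tti1_X2: "NR (hsub sT1 (sT1i X2) @ inv_word [(X2,True)])"
  by (rule NR_check[where qs="[]"]) (simp_all add: chk_simps)

lemma tti2_X2: "NR (hsub sT2 (sT2i X2) @ inv_word [(X2,True)])"
  by (rule NR_check[where qs="[]"]) (simp_all add: chk_simps)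

lemma tk1_Y1: "NR (sT1 Y1 @ inv_word ([(X1,True)] @ sK1 Y1 @ inv_word [(X1,True)]))"
  by (rule NR_check[where qs="[([(Y1,True),(X1,True),(Y1,False),(X1,False)],0,False)]"]) (simp_all add: chk_simps)

lemma tk2_Y1: "NR (sT2 Y1 @ inv_word ([(Y2,True)] @ sK2 Y1 @ inv_word [(Y2,True)]))"
  by (rule NR_check[where qs="[]"]) (simp_all add: chk_simps)

lemma tti1_Y1: "NR (hsub sT1 (sT1i Y1) @ inv_word [(Y1,True)])"
  by (rule NR_check[where qs="[]"]) (simp_all add: chk_simps)

lemma tti2_Y1: "NR (hsub sT2 (sT2i Y1) @ inv_word [(Y1,True)])"
  by (rule NR_check[where qs="[]"]) (simp_all add: chk_simps)

lemma tk1_Y2: "NR (sT1 Y2 @ inv_word ([(X1,True)] @ sK1 Y2 @ inv_word [(X1,True)]))"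
  by (rule NR_check[where qs="[]"]) (simp_all add: chk_simps)

lemma tk2_Y2: "NR (sT2 Y2 @ inv_word ([(Y2,True)] @ sK2 Y2 @ inv_word [(Y2,True)]))"
  by (rule NR_check[where qs="[]"]) (simp_all add: chk_simps)

lemma tti1_Y2: "NR (hsub sT1 (sT1i Y2) @ inv_word [(Y2,True)])"
  by (rule NR_check[where qs="[]"]) (simp_all add: chk_simps)

lemma tti2_Y2: "NR (hsub sT2 (sT2i Y2) @ inv_word [(Y2,True)])"
  by (rule NR_check[where qs="[]"]) (simp_all add: chk_simps)

lemma zb1: "NR (z1w @ b0w @ inv_word (b0w @ z1w))"
  by (rule NR_check[where qs="[([(Y1,False),(X1,True),(X1,True),(Y2,True),(X1,False),(Y2,False),(X1,False),(Y1,True),(Y2,True),(X1,True),(Y2,False),(X1,False),(Y1,False)],0,True),([(Y1,False),(X1,True),(X1,True),(Y2,True),(X1,False),(Y2,False),(X1,False),(Y1,True),(Y2,True),(X1,True),(Y2,False),(Y1,False)],2,True),([(Y1,False),(X1,True),(X1,True),(Y2,True),(X1,False),(Y2,False),(X1,False),(Y1,True),(Y2,True),(X1,True),(Y2,False),(X2,True),(Y1,False),(X2,False),(Y1,True)],4,True),([(Y1,False),(X1,True),(X1,True),(Y2,True),(X1,False),(Y2,False),(X1,False),(Y1,True),(X1,True),(Y1,False),(X1,False)],0,False)]"]) (simp_all add: chk_simps)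

lemma zb2: "NR (z2w @ b0w @ inv_word (b0w @ z2w))"
  by (rule NR_check[where qs="[([(Y2,False),(X2,True),(X1,True),(Y2,True),(X1,False),(Y2,False),(X2,False)],1,False),([(Y2,False),(X2,True),(X1,True),(Y2,True),(X1,False),(X2,False),(Y2,True),(X1,True),(Y2,False),(X1,False)],2,False),([(Y2,False),(X2,True),(X1,True),(Y2,True),(X1,False),(Y1,True),(X2,False),(Y1,False),(Y2,False),(X2,True),(X1,True),(Y2,True),(X1,False)],3,False),([(Y2,False),(X2,True),(X1,True),(Y2,True),(X1,False),(Y1,True),(X2,False),(Y1,False),(Y2,False)],1,True)]"]) (simp_all add: chk_simps)

lemma let_1True_1True: "NR (comm (subst2 [(T1,True)] y1w y2w) (subst2 [(T1,True)] x1w x2w) @ inv_word (comm (subst2 [(T1,True)] x1w x2w) (subst2 [(T1,True)] y1w y2w)))"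
  by (rule NR_check[where qs="[([(Y1,True),(X1,True),(Y1,False),(X1,False)],0,False),([(Y1,True),(X1,True),(Y1,False),(X1,False)],0,False)]"]) (simp_all add: chk_simps)

lemma let_1True_1False: "NR (comm (subst2 [(T1,True)] y1w y2w) (subst2 [(T1,False)] x1w x2w) @ inv_word (comm (subst2 [(T1,True)] x1w x2w) (subst2 [(T1,False)] y1w y2w)))"
  by (rule NR_check[where qs="[([(Y1,True),(X1,False),(Y1,False)],0,True),([(Y1,False)],0,True)]"]) (simp_all add: chk_simps)

lemma let_1True_2True: "NR (comm (subst2 [(T1,True)] y1w y2w) (subst2 [(T2,True)] x1w x2w) @ inv_word (comm (subst2 [(T1,True)] x1w x2w) (subst2 [(T2,True)] y1w y2w)))"
  by (rule NR_check[where qs="[([(Y1,True),(X2,True),(Y1,False),(X2,False),(Y2,True),(X1,True),(Y2,False),(X1,False)],2,False)]"]) (simp_all add: chk_simps)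

lemma let_1True_2False: "NR (comm (subst2 [(T1,True)] y1w y2w) (subst2 [(T2,False)] x1w x2w) @ inv_word (comm (subst2 [(T1,True)] x1w x2w) (subst2 [(T2,False)] y1w y2w)))"
  by (rule NR_check[where qs="[([(Y1,True),(X2,False),(Y1,False),(X2,True),(Y2,False),(X1,True),(Y2,True),(X1,False)],3,False)]"]) (simp_all add: chk_simps)

lemma let_1False_1True: "NR (comm (subst2 [(T1,False)] y1w y2w) (subst2 [(T1,True)] x1w x2w) @ inv_word (comm (subst2 [(T1,False)] x1w x2w) (subst2 [(T1,True)] y1w y2w)))"
  by (rule NR_check[where qs="[([(Y1,False),(X1,True),(Y1,True),(X1,False),(Y1,True),(X1,False),(Y1,False)],0,True),([(Y1,False),(X1,True),(Y1,True),(X1,False),(Y1,False)],0,True)]"]) (simp_all add: chk_simps)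

lemma let_1False_1False: "NR (comm (subst2 [(T1,False)] y1w y2w) (subst2 [(T1,False)] x1w x2w) @ inv_word (comm (subst2 [(T1,False)] x1w x2w) (subst2 [(T1,False)] y1w y2w)))"
  by (rule NR_check[where qs="[([(Y1,False),(X1,False)],0,False),([(Y1,False),(X1,False)],0,False)]"]) (simp_all add: chk_simps)

lemma let_1False_2True: "NR (comm (subst2 [(T1,False)] y1w y2w) (subst2 [(T2,True)] x1w x2w) @ inv_word (comm (subst2 [(T1,False)] x1w x2w) (subst2 [(T2,True)] y1w y2w)))"
  by (rule NR_check[where qs="[([(Y1,False),(X2,True),(Y1,True),(X2,False),(Y2,True),(X1,False),(Y2,False),(X1,True)],4,False)]"]) (simp_all add: chk_simps)

lemma let_1False_2False: "NR (comm (subst2 [(T1,False)] y1w y2w) (subst2 [(T2,False)] x1w x2w) @ inv_word (comm (subst2 [(T1,False)] x1w x2w) (subst2 [(T2,False)] y1w y2w)))"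
  by (rule NR_check[where qs="[([(Y1,False),(X2,False),(Y1,True),(X2,True),(Y2,False),(X1,False),(Y2,True),(X1,True)],5,False)]"]) (simp_all add: chk_simps)

lemma let_2True_1True: "NR (comm (subst2 [(T2,True)] y1w y2w) (subst2 [(T1,True)] x1w x2w) @ inv_word (comm (subst2 [(T2,True)] x1w x2w) (subst2 [(T1,True)] y1w y2w)))"
  by (rule NR_check[where qs="[([(Y2,True),(X1,True),(Y2,False),(X1,False)],2,False)]"]) (simp_all add: chk_simps)

lemma let_2True_1False: "NR (comm (subst2 [(T2,True)] y1w y2w) (subst2 [(T1,False)] x1w x2w) @ inv_word (comm (subst2 [(T2,True)] x1w x2w) (subst2 [(T1,False)] y1w y2w)))"
  by (rule NR_check[where qs="[([(Y2,True),(X1,False),(Y2,False),(X1,True)],4,False)]"]) (simp_all add: chk_simps)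

lemma let_2True_2True: "NR (comm (subst2 [(T2,True)] y1w y2w) (subst2 [(T2,True)] x1w x2w) @ inv_word (comm (subst2 [(T2,True)] x1w x2w) (subst2 [(T2,True)] y1w y2w)))"
  by (rule NR_check[where qs="[([(Y2,True),(X2,True),(Y2,False),(X2,False)],1,False),([(Y2,True),(X2,True),(Y2,False),(X2,False)],1,False)]"]) (simp_all add: chk_simps)

lemma let_2True_2False: "NR (comm (subst2 [(T2,True)] y1w y2w) (subst2 [(T2,False)] x1w x2w) @ inv_word (comm (subst2 [(T2,True)] x1w x2w) (subst2 [(T2,False)] y1w y2w)))"
  by (rule NR_check[where qs="[([(Y2,True),(X2,False),(Y2,False)],1,True),([(Y2,False)],1,True)]"]) (simp_all add: chk_simps)

lemma let_2False_1True: "NR (comm (subst2 [(T2,False)] y1w y2w) (subst2 [(T1,True)] x1w x2w) @ inv_word (comm (subst2 [(T2,False)] x1w x2w) (subst2 [(T1,True)] y1w y2w)))"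
  by (rule NR_check[where qs="[([(Y2,False),(X1,True),(Y2,True),(X1,False)],3,False)]"]) (simp_all add: chk_simps)

lemma let_2False_1False: "NR (comm (subst2 [(T2,False)] y1w y2w) (subst2 [(T1,False)] x1w x2w) @ inv_word (comm (subst2 [(T2,False)] x1w x2w) (subst2 [(T1,False)] y1w y2w)))"
  by (rule NR_check[where qs="[([(Y2,False),(X1,False),(Y2,True),(X1,True)],5,False)]"]) (simp_all add: chk_simps)

lemma let_2False_2True: "NR (comm (subst2 [(T2,False)] y1w y2w) (subst2 [(T2,True)] x1w x2w) @ inv_word (comm (subst2 [(T2,False)] x1w x2w) (subst2 [(T2,True)] y1w y2w)))"
  by (rule NR_check[where qs="[([(Y2,False),(X2,True),(Y2,True),(X2,False),(Y2,True),(X2,False),(Y2,False)],1,True),([(Y2,False),(X2,True),(Y2,True),(X2,False),(Y2,False)],1,True)]"]) (simp_all add: chk_simps)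

lemma let_2False_2False: "NR (comm (subst2 [(T2,False)] y1w y2w) (subst2 [(T2,False)] x1w x2w) @ inv_word (comm (subst2 [(T2,False)] x1w x2w) (subst2 [(T2,False)] y1w y2w)))"
  by (rule NR_check[where qs="[([(Y2,False),(X2,False)],1,False),([(Y2,False),(X2,False)],1,False)]"]) (simp_all add: chk_simps)

lemmas gsimp = diff_conv_add_uminus add.assoc minus_add right_minus left_minus minus_minus
  add_0_left add_0_right minus_zero

lemma g_conj_plus: "(g::'a::group_add) + (a + b) - g = (g + a - g) + (g + b - g)"
  by (simp del: add_uminus_conv_diff add: gsimp)

lemma g_conj_minus: "(g::'a::group_add) + - a - g = - (g + a - g)"
  by (simp del: add_uminus_conv_diff add: gsimp)

lemma g_conj_conj: "(g::'a::group_add) + (h + a - h) - g = (g + h) + a - (g + h)"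
  by (simp del: add_uminus_conv_diff add: gsimp)

lemma g_comm_minus: "(c::'a::group_add) + x = x + c \<Longrightarrow> c + - x = - x + c"
proof -
  assume h: "c + x = x + c"
  have "- x + (c + x) + - x = - x + (x + c) + - x" using h by simp
  then show ?thesis by (simp del: add_uminus_conv_diff add: gsimp)
qed

lemma g_comm_sym: "(c::'a::group_add) + x = x + c \<Longrightarrow> x + c = c + x"
  by simp

lemma g_comm_plus: "(c::'a::group_add) + x = x + c \<Longrightarrow> c + y = y + c \<Longrightarrow> c + (x + y) = (x + y) + c"
  by (metis add.assoc)

lemma g_comm_conj: "(c::'a::group_add) + x = x + c \<Longrightarrow> c + x - c = x"
  by (metis add_diff_cancel)

lemma g_conj_comm: "(c::'a::group_add) + x - c = x \<Longrightarrow> c + x = x + c"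
  by (metis diff_add_cancel)

lemma g_comm0: "(a::'a::group_add) + b - a - b = 0 \<Longrightarrow> a + b = b + a"
  by (metis diff_add_cancel right_minus_eq)

definition cm :: "kg \<Rightarrow> kg \<Rightarrow> kg" where "cm a b = a + b - a - b"

lemma cls_comm: "cls (comm g h) = cm (cls g) (cls h)"
  unfolding comm_def cm_def cls_app cls_inv
  by (simp del: add_uminus_conv_diff add: gsimp)

lemma cm_L: "cm (a + b) c = a + cm b c - a + cm a c"
  unfolding cm_def by (simp del: add_uminus_conv_diff add: gsimp)

lemma cm_R: "cm a (b + c) = cm a b + (b + cm a c - b)"
  unfolding cm_def by (simp del: add_uminus_conv_diff add: gsimp)

lemma cm_0L[simp]: "cm 0 a = 0" unfolding cm_def by simp
lemma cm_0R[simp]: "cm a 0 = 0" unfolding cm_def by simp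

lemma cm_swap: "cm a b = - cm b a"
  unfolding cm_def by (simp del: add_uminus_conv_diff add: gsimp)

lemma cm_negL: "cm (- a) b = (- a) + (- cm a b) - (- a)"
  unfolding cm_def by (simp del: add_uminus_conv_diff add: gsimp)

lemma cm_negR: "cm a (- b) = (- b) + (- cm a b) - (- b)"
  unfolding cm_def by (simp del: add_uminus_conv_diff add: gsimp)

lemma cm_zero_comm: "a + b = b + a \<Longrightarrow> cm a b = 0"
  unfolding cm_def by (simp add: algebra_simps)

lemma comm_signs: "(a::kg) + b = b + a \<Longrightarrow> - a + b = b + - a \<and> a + - b = - b + a \<and> - a + - b = - b + - a"
  by (metis g_comm_minus)

definition A1 :: kg where "A1 = gen X1"
definition A2 :: kg where "A2 = gen X2"
definition B1 :: kg where "B1 = gen Y1"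
definition B2 :: kg where "B2 = gen Y2"
definition Z1 :: kg where "Z1 = cls z1w"
definition Z2 :: kg where "Z2 = cls z2w"
definition B0 :: kg where "B0 = cls b0w"

lemma Z1_eq: "Z1 = - B1 + A1"
  unfolding Z1_def z1w_def B1_def A1_def by (simp add: cls_Cons cls_Nil)
lemma Z2_eq: "Z2 = - B2 + A2"
  unfolding Z2_def z2w_def B2_def A2_def by (simp add: cls_Cons cls_Nil)
lemma B0_eq: "B0 = cm A1 B2"
  unfolding B0_def b0w_def cls_comm A1_def B2_def gen_def ..

lemma rel0: "A1 + B1 = B1 + A1"
proof -
  have "cls (relw 0) = 0" using NR_relw[of 0] cls_zero_iff by simp
  then have "cm A1 B1 = 0" by (simp add: relw_def relws_def cls_comm A1_def B1_def gen_def gw_def)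
  then show ?thesis unfolding cm_def by (rule g_comm0)
qed

lemma rel1: "A2 + B2 = B2 + A2"
proof -
  have "cls (relw 1) = 0" using NR_relw[of 1] cls_zero_iff by simp
  then have "cm A2 B2 = 0" by (simp add: relw_def relws_def cls_comm A2_def B2_def gen_def gw_def)
  then show ?thesis unfolding cm_def by (rule g_comm0)
qed

lemma rel2: "cm A2 B1 = - B0"
proof -
  have "cls (relw 2) = 0" using NR_relw[of 2] cls_zero_iff by simp
  then have "cm A1 B2 + cm A2 B1 = 0"
    by (simp add: relw_def relws_def cls_comm cls_app A1_def B2_def A2_def B1_def gen_def gw_def)
  then show ?thesis using B0_eq by (metis add_eq_0_iff)
qed

definition "hom (\<phi>::kg \<Rightarrow> kg) \<longleftrightarrow> (\<forall>a b. \<phi> (a + b) = \<phi> a + \<phi> b)"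

lemma hom_zero: "hom \<phi> \<Longrightarrow> \<phi> 0 = 0"
  unfolding hom_def by (metis add.right_neutral add_left_cancel)

lemma hom_minus: "hom \<phi> \<Longrightarrow> \<phi> (- a) = - \<phi> a"
proof -
  assume h: "hom \<phi>"
  have "\<phi> (- a) + \<phi> a = 0" using h hom_zero[OF h] unfolding hom_def by (metis left_minus)
  then show ?thesis by (simp add: add_eq_0_iff2)
qed

lemma hom_ext:
  assumes "hom \<phi>" "hom \<psi>" "\<And>a. \<phi> (gen a) = \<psi> (gen a)"
  shows "\<phi> x = \<psi> x"
proof -
  obtain w where w: "cls w = x" using cls_surj by metis
  have "\<phi> (ev gen w) = \<psi> (ev gen w)"
  proof (induction w)
    case Nil
    then show ?case using hom_zero[OF assms(1)] hom_zero[OF assms(2)] by simp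
  next
    case (Cons y w)
    then show ?case using assms hom_minus[OF assms(1)] hom_minus[OF assms(2)]
      unfolding hom_def by simp
  qed
  then show ?thesis using w cls_ev by simp
qed

lemma hom_H: "good f \<Longrightarrow> hom (H f)"
  unfolding hom_def by (simp add: H_add)

lemma six_cases: "(i::nat) < 6 \<Longrightarrow> i = 0 \<or> i = 1 \<or> i = 2 \<or> i = 3 \<or> i = 4 \<or> i = 5"
  by linarith

lemma good6:
  assumes "NR (hsub s (relw 0))" "NR (hsub s (relw 1))" "NR (hsub s (relw 2))"
    "NR (hsub s (relw 3))" "NR (hsub s (relw 4))" "NR (hsub s (relw 5))"
  shows "good (\<lambda>a. cls (s a))"
proof (rule good_hsub)
  have "NR (hsub s (relw i))" if "i < 6" for i
  proof -
    from six_cases[OF that] show ?thesis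
      by (elim disjE) (simp_all only: assms)
  qed
  then show "\<forall>r\<in>K_relators. NR (hsub s r)" unfolding all_K_rel by blast
qed

definition "fT1 = (\<lambda>a. cls (sT1 a))"
definition "fT1i = (\<lambda>a. cls (sT1i a))"
definition "fT2 = (\<lambda>a. cls (sT2 a))"
definition "fT2i = (\<lambda>a. cls (sT2i a))"
definition "fK1 = (\<lambda>a. cls (sK1 a))"
definition "fK2 = (\<lambda>a. cls (sK2 a))"

lemma gT1: "good fT1" unfolding fT1_def
  by (rule good6) (rule good_sT1_0 good_sT1_1 good_sT1_2 good_sT1_3 good_sT1_4 good_sT1_5)+
lemma gT1i: "good fT1i" unfolding fT1i_def
  by (rule good6) (rule good_sT1i_0 good_sT1i_1 good_sT1i_2 good_sT1i_3 good_sT1i_4 good_sT1i_5)+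
lemma gT2: "good fT2" unfolding fT2_def
  by (rule good6) (rule good_sT2_0 good_sT2_1 good_sT2_2 good_sT2_3 good_sT2_4 good_sT2_5)+
lemma gT2i: "good fT2i" unfolding fT2i_def
  by (rule good6) (rule good_sT2i_0 good_sT2i_1 good_sT2i_2 good_sT2i_3 good_sT2i_4 good_sT2i_5)+
lemma gK1: "good fK1" unfolding fK1_def
  by (rule good6) (rule good_sK1_0 good_sK1_1 good_sK1_2 good_sK1_3 good_sK1_4 good_sK1_5)+
lemma gK2: "good fK2" unfolding fK2_def
  by (rule good6) (rule good_sK2_0 good_sK2_1 good_sK2_2 good_sK2_3 good_sK2_4 good_sK2_5)+

definition "HT1 = H fT1"
definition "HT1i = H fT1i"
definition "HT2 = H fT2"
definition "HT2i = H fT2i"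
definition "HK1 = H fK1"
definition "HK2 = H fK2"

lemma homs: "hom HT1" "hom HT1i" "hom HT2" "hom HT2i" "hom HK1" "hom HK2"
  unfolding HT1_def HT1i_def HT2_def HT2i_def HK1_def HK2_def
  using hom_H gT1 gT1i gT2 gT2i gK1 gK2 by auto

lemma HT1_cls: "HT1 (cls w) = cls (hsub sT1 w)" unfolding HT1_def fT1_def using gT1[unfolded fT1_def] by (rule H_hsub)
lemma HT1i_cls: "HT1i (cls w) = cls (hsub sT1i w)" unfolding HT1i_def fT1i_def using gT1i[unfolded fT1i_def] by (rule H_hsub)
lemma HT2_cls: "HT2 (cls w) = cls (hsub sT2 w)" unfolding HT2_def fT2_def using gT2[unfolded fT2_def] by (rule H_hsub)
lemma HT2i_cls: "HT2i (cls w) = cls (hsub sT2i w)" unfolding HT2i_def fT2i_def using gT2i[unfolded fT2i_def] by (rule H_hsub)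
lemma HK1_cls: "HK1 (cls w) = cls (hsub sK1 w)" unfolding HK1_def fK1_def using gK1[unfolded fK1_def] by (rule H_hsub)
lemma HK2_cls: "HK2 (cls w) = cls (hsub sK2 w)" unfolding HK2_def fK2_def using gK2[unfolded fK2_def] by (rule H_hsub)

lemma hsub_single: "hsub s [(a, True)] = s a" by simp

lemma gen_cls: "gen a = cls [(a, True)]" by (simp add: gen_def)

lemma kgen4: "P X1 \<Longrightarrow> P X2 \<Longrightarrow> P Y1 \<Longrightarrow> P Y2 \<Longrightarrow> P a"
  by (cases a) auto

lemma hom_comp: "hom \<phi> \<Longrightarrow> hom \<psi> \<Longrightarrow> hom (\<lambda>x. \<phi> (\<psi> x))"
  unfolding hom_def by simp

lemma hom_conj: "hom \<phi> \<Longrightarrow> hom (\<lambda>x. g + \<phi> x - g)"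
  unfolding hom_def by (simp add: g_conj_plus)

lemma hom_id: "hom (\<lambda>x. x)"
  unfolding hom_def by simp

lemma KT_gen:
  assumes "NR (hsub sK (sT a) @ inv_word (hsub sT (sK a)))"
    and "\<And>w. HK (cls w) = cls (hsub sK w)" and "\<And>w. HT (cls w) = cls (hsub sT w)"
  shows "HK (HT (gen a)) = HT (HK (gen a))"
  using eqG_of_NR[OF assms(1)] by (simp add: gen_cls assms(2,3))

lemma TK_gen:
  assumes "NR (sT a @ inv_word ([(c,True)] @ sK a @ inv_word [(c,True)]))"
    and "\<And>w. HK (cls w) = cls (hsub sK w)" and "\<And>w. HT (cls w) = cls (hsub sT w)"
  shows "HT (gen a) = gen c + HK (gen a) - gen c"
proof -
  have 1: "HT (gen a) = cls (sT a)" by (simp add: gen_cls assms(3))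
  have 2: "gen c + HK (gen a) - gen c = cls ([(c,True)] @ sK a @ inv_word [(c,True)])"
    by (simp only: gen_cls assms(2) hsub_single cls_app cls_inv diff_conv_add_uminus add.assoc)
  show ?thesis unfolding 1 2 by (rule eqG_of_NR[OF assms(1)])
qed

lemma TTi_gen:
  assumes "NR (hsub sT (sTi a) @ inv_word [(a,True)])"
    and "\<And>w. HTi (cls w) = cls (hsub sTi w)" and "\<And>w. HT (cls w) = cls (hsub sT w)"
  shows "HT (HTi (gen a)) = gen a"
  using eqG_of_NR[OF assms(1)] by (simp add: gen_cls assms(2,3))

lemma Zfix_gen:
  assumes "NR (hsub sT z @ inv_word z)" and "\<And>w. HT (cls w) = cls (hsub sT w)"
  shows "HT (cls z) = cls z"
  using eqG_of_NR[OF assms(1)] by (simp add: assms(2))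

lemma KT_K1_T1: "HK1 (HT1 x) = HT1 (HK1 x)"
  by (rule hom_ext[OF hom_comp[OF homs(5) homs(1)] hom_comp[OF homs(1) homs(5)]],
      rule kgen4; rule KT_gen[OF _ HK1_cls HT1_cls];
      rule kt_sK1_sT1_X1 kt_sK1_sT1_X2 kt_sK1_sT1_Y1 kt_sK1_sT1_Y2)

lemma KT_K1_T1i: "HK1 (HT1i x) = HT1i (HK1 x)"
  by (rule hom_ext[OF hom_comp[OF homs(5) homs(2)] hom_comp[OF homs(2) homs(5)]],
      rule kgen4; rule KT_gen[OF _ HK1_cls HT1i_cls];
      rule kt_sK1_sT1i_X1 kt_sK1_sT1i_X2 kt_sK1_sT1i_Y1 kt_sK1_sT1i_Y2)

lemma KT_K1_T2: "HK1 (HT2 x) = HT2 (HK1 x)"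
  by (rule hom_ext[OF hom_comp[OF homs(5) homs(3)] hom_comp[OF homs(3) homs(5)]],
      rule kgen4; rule KT_gen[OF _ HK1_cls HT2_cls];
      rule kt_sK1_sT2_X1 kt_sK1_sT2_X2 kt_sK1_sT2_Y1 kt_sK1_sT2_Y2)

lemma KT_K1_T2i: "HK1 (HT2i x) = HT2i (HK1 x)"
  by (rule hom_ext[OF hom_comp[OF homs(5) homs(4)] hom_comp[OF homs(4) homs(5)]],
      rule kgen4; rule KT_gen[OF _ HK1_cls HT2i_cls];
      rule kt_sK1_sT2i_X1 kt_sK1_sT2i_X2 kt_sK1_sT2i_Y1 kt_sK1_sT2i_Y2)

lemma KT_K2_T1: "HK2 (HT1 x) = HT1 (HK2 x)"
  by (rule hom_ext[OF hom_comp[OF homs(6) homs(1)] hom_comp[OF homs(1) homs(6)]],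
      rule kgen4; rule KT_gen[OF _ HK2_cls HT1_cls];
      rule kt_sK2_sT1_X1 kt_sK2_sT1_X2 kt_sK2_sT1_Y1 kt_sK2_sT1_Y2)

lemma KT_K2_T1i: "HK2 (HT1i x) = HT1i (HK2 x)"
  by (rule hom_ext[OF hom_comp[OF homs(6) homs(2)] hom_comp[OF homs(2) homs(6)]],
      rule kgen4; rule KT_gen[OF _ HK2_cls HT1i_cls];
      rule kt_sK2_sT1i_X1 kt_sK2_sT1i_X2 kt_sK2_sT1i_Y1 kt_sK2_sT1i_Y2)

lemma KT_K2_T2: "HK2 (HT2 x) = HT2 (HK2 x)"
  by (rule hom_ext[OF hom_comp[OF homs(6) homs(3)] hom_comp[OF homs(3) homs(6)]],
      rule kgen4; rule KT_gen[OF _ HK2_cls HT2_cls];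
      rule kt_sK2_sT2_X1 kt_sK2_sT2_X2 kt_sK2_sT2_Y1 kt_sK2_sT2_Y2)

lemma KT_K2_T2i: "HK2 (HT2i x) = HT2i (HK2 x)"
  by (rule hom_ext[OF hom_comp[OF homs(6) homs(4)] hom_comp[OF homs(4) homs(6)]],
      rule kgen4; rule KT_gen[OF _ HK2_cls HT2i_cls];
      rule kt_sK2_sT2i_X1 kt_sK2_sT2i_X2 kt_sK2_sT2i_Y1 kt_sK2_sT2i_Y2)

lemma TK1: "HT1 x = A1 + HK1 x - A1"
  unfolding A1_def
  by (rule hom_ext[OF homs(1) hom_conj[OF homs(5)]],
      rule kgen4; rule TK_gen[OF _ HK1_cls HT1_cls];
      rule tk1_X1 tk1_X2 tk1_Y1 tk1_Y2)

lemma TK2: "HT2 x = B2 + HK2 x - B2"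
  unfolding B2_def
  by (rule hom_ext[OF homs(3) hom_conj[OF homs(6)]],
      rule kgen4; rule TK_gen[OF _ HK2_cls HT2_cls];
      rule tk2_X1 tk2_X2 tk2_Y1 tk2_Y2)

lemma TTi1: "HT1 (HT1i x) = x"
  by (rule hom_ext[OF hom_comp[OF homs(1) homs(2)] hom_id],
      rule kgen4; rule TTi_gen[OF _ HT1i_cls HT1_cls];
      rule tti1_X1 tti1_X2 tti1_Y1 tti1_Y2)

lemma TTi2: "HT2 (HT2i x) = x"
  by (rule hom_ext[OF hom_comp[OF homs(3) homs(4)] hom_id],
      rule kgen4; rule TTi_gen[OF _ HT2i_cls HT2_cls];
      rule tti2_X1 tti2_X2 tti2_Y1 tti2_Y2)

lemma Zfix:
  "HT1 Z1 = Z1" "HT1 Z2 = Z2" "HT1i Z1 = Z1" "HT1i Z2 = Z2"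
  "HT2 Z1 = Z1" "HT2 Z2 = Z2" "HT2i Z1 = Z1" "HT2i Z2 = Z2"
  unfolding Z1_def Z2_def
  by (rule Zfix_gen, rule zfix_sT1_z1w zfix_sT1_z2w zfix_sT1i_z1w zfix_sT1i_z2w
      zfix_sT2_z1w zfix_sT2_z2w zfix_sT2i_z1w zfix_sT2i_z2w,
      rule HT1_cls HT1i_cls HT2_cls HT2i_cls)+

lemma K_B0: "HK1 B0 = B0" "HK2 B0 = B0"
  unfolding B0_def HK1_cls HK2_cls by (simp_all add: b0w_def comm_def gw_def sK1_def sK2_def flipl_def)

lemma Z_B0: "Z1 + B0 = B0 + Z1" "Z2 + B0 = B0 + Z2"
proof -
  have "NR ((z1w @ b0w) @ inv_word (b0w @ z1w))" using zb1 by simp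
  then have "cls (z1w @ b0w) = cls (b0w @ z1w)" by (rule eqG_of_NR)
  then show "Z1 + B0 = B0 + Z1" unfolding Z1_def B0_def by (simp add: cls_app)
  have "NR ((z2w @ b0w) @ inv_word (b0w @ z2w))" using zb2 by simp
  then have "cls (z2w @ b0w) = cls (b0w @ z2w)" by (rule eqG_of_NR)
  then show "Z2 + B0 = B0 + Z2" unfolding Z2_def B0_def by (simp add: cls_app)
qed

inductive_set Sset :: "kg set" where
  S0: "B0 \<in> Sset"
| S1: "x \<in> Sset \<Longrightarrow> HT1 x \<in> Sset"
| S2: "x \<in> Sset \<Longrightarrow> HT1i x \<in> Sset"
| S3: "x \<in> Sset \<Longrightarrow> HT2 x \<in> Sset"
| S4: "x \<in> Sset \<Longrightarrow> HT2i x \<in> Sset"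

lemma S_K: "x \<in> Sset \<Longrightarrow> HK1 x = x \<and> HK2 x = x"
  by (induction rule: Sset.induct)
     (simp_all add: K_B0 KT_K1_T1 KT_K1_T1i KT_K1_T2 KT_K1_T2i KT_K2_T1 KT_K2_T1i KT_K2_T2 KT_K2_T2i)

lemma hom_commute: "hom \<phi> \<Longrightarrow> \<phi> c = c \<Longrightarrow> c + x = x + c \<Longrightarrow> c + \<phi> x = \<phi> x + c"
  unfolding hom_def by metis

lemma S_Z: "x \<in> Sset \<Longrightarrow> Z1 + x = x + Z1 \<and> Z2 + x = x + Z2"
proof (induction rule: Sset.induct)
  case S0
  then show ?case using Z_B0 by simp
next
  case (S1 x)
  then show ?case using hom_commute[OF homs(1)] Zfix by simp
next
  case (S2 x)
  then show ?case using hom_commute[OF homs(2)] Zfix by simp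
next
  case (S3 x)
  then show ?case using hom_commute[OF homs(3)] Zfix by simp
next
  case (S4 x)
  then show ?case using hom_commute[OF homs(4)] Zfix by simp
qed

lemma g_comm_negc: "(c::'a::group_add) + x = x + c \<Longrightarrow> - c + x = x + - c"
  using g_comm_minus[of x c] by simp

lemma g_prod_conj: "((a::'a::group_add) + b) + x - (a + b) = a + (b + x - b) - a"
  by (simp del: add_uminus_conv_diff add: gsimp)

lemma g_solve:
  assumes "(a::'a::group_add) + y - a = x" shows "y = - a + x - - a"
proof -
  have "y = - a + (a + y - a) - - a" by (simp del: add_uminus_conv_diff add: gsimp)
  then show ?thesis using assms by simp
qed

lemma B1_eq: "B1 = A1 + - Z1"
  unfolding Z1_eq by (simp del: add_uminus_conv_diff add: gsimp)
lemma A2_eq: "A2 = B2 + Z2"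
  unfolding Z2_eq by (simp del: add_uminus_conv_diff add: gsimp)
lemma A1_eq: "A1 = B1 + Z1"
  unfolding Z1_eq by (simp del: add_uminus_conv_diff add: gsimp)

lemma S_A1: "x \<in> Sset \<Longrightarrow> A1 + x - A1 \<in> Sset"
  using TK1[of x] S_K[of x] S1[of x] by simp

lemma S_A1n: "x \<in> Sset \<Longrightarrow> - A1 + x - - A1 \<in> Sset"
proof -
  assume x: "x \<in> Sset"
  let ?y = "HT1i x"
  have y: "?y \<in> Sset" using S2[OF x] .
  have "A1 + ?y - A1 = x" using TK1[of ?y] S_K[OF y] TTi1[of x] by simp
  then have "?y = - A1 + x - - A1" by (rule g_solve)
  then show ?thesis using y by simp
qed

lemma S_B2: "x \<in> Sset \<Longrightarrow> B2 + x - B2 \<in> Sset"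
  using TK2[of x] S_K[of x] S3[of x] by simp

lemma S_B2n: "x \<in> Sset \<Longrightarrow> - B2 + x - - B2 \<in> Sset"
proof -
  assume x: "x \<in> Sset"
  let ?y = "HT2i x"
  have y: "?y \<in> Sset" using S4[OF x] .
  have "B2 + ?y - B2 = x" using TK2[of ?y] S_K[OF y] TTi2[of x] by simp
  then have "?y = - B2 + x - - B2" by (rule g_solve)
  then show ?thesis using y by simp
qed

lemma conj_by_comm: "(c::'a::group_add) + x = x + c \<Longrightarrow> (a + c) + x - (a + c) = a + x - a"
  by (simp add: g_prod_conj g_comm_conj)

lemma conj_by_commn: "(c::'a::group_add) + x = x + c \<Longrightarrow> (a + - c) + x - (a + - c) = a + x - a"
  using conj_by_comm[of "- c" x a] g_comm_negc by blast

lemma S_B1: "x \<in> Sset \<Longrightarrow> B1 + x - B1 \<in> Sset"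
proof -
  assume x: "x \<in> Sset"
  have "B1 + x - B1 = A1 + x - A1" unfolding B1_eq using S_Z[OF x] conj_by_commn by blast
  then show ?thesis using S_A1[OF x] by simp
qed

lemma S_B1n: "x \<in> Sset \<Longrightarrow> - B1 + x - - B1 \<in> Sset"
proof -
  assume x: "x \<in> Sset"
  let ?y = "- A1 + x - - A1"
  have y: "?y \<in> Sset" using S_A1n[OF x] .
  have "- B1 + x - - B1 = Z1 + ?y - Z1"
    unfolding B1_eq by (simp del: add_uminus_conv_diff add: gsimp)
  also have "\<dots> = ?y" using S_Z[OF y] g_comm_conj by blast
  finally show ?thesis using y by simp
qed

lemma S_A2: "x \<in> Sset \<Longrightarrow> A2 + x - A2 \<in> Sset"
proof -
  assume x: "x \<in> Sset"
  have "A2 + x - A2 = B2 + x - B2" unfolding A2_eq using S_Z[OF x] conj_by_comm by blast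
  then show ?thesis using S_B2[OF x] by simp
qed

lemma S_A2n: "x \<in> Sset \<Longrightarrow> - A2 + x - - A2 \<in> Sset"
proof -
  assume x: "x \<in> Sset"
  let ?y = "- B2 + x - - B2"
  have y: "?y \<in> Sset" using S_B2n[OF x] .
  have "- A2 + x - - A2 = - Z2 + ?y - - Z2"
    unfolding A2_eq by (simp del: add_uminus_conv_diff add: gsimp)
  also have "\<dots> = ?y" using S_Z[OF y] g_comm_conj g_comm_negc by blast
  finally show ?thesis using y by simp
qed

definition gl :: "kgen \<times> bool \<Rightarrow> kg" where
  "gl x = (if snd x then gen (fst x) else - gen (fst x))"

lemma S_letter: "x \<in> Sset \<Longrightarrow> gl l + x - gl l \<in> Sset"
proof -
  assume x: "x \<in> Sset"
  obtain a s where l: "l = (a, s)" by (cases l)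
  show ?thesis
  proof (cases s)
    case True
    then show ?thesis using l x S_A1 S_A2 S_B1 S_B2
      by (cases a) (simp_all add: gl_def A1_def A2_def B1_def B2_def)
  next
    case False
    then show ?thesis using l x S_A1n S_A2n S_B1n S_B2n
      by (cases a) (simp_all add: gl_def A1_def A2_def B1_def B2_def)
  qed
qed

lemma ev_gen_Cons: "ev gen (l # w) = gl l + ev gen w"
  by (simp add: gl_def)

lemma S_conj: "g + B0 - g \<in> Sset"
proof -
  obtain w where w: "cls w = g" using cls_surj by metis
  have "ev gen w + B0 - ev gen w \<in> Sset"
  proof (induction w)
    case Nil
    then show ?case using S0 by simp
  next
    case (Cons l w)
    have "ev gen (l # w) + B0 - ev gen (l # w) = gl l + (ev gen w + B0 - ev gen w) - gl l"
      unfolding ev_gen_Cons by (rule g_prod_conj)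
    then show ?case using S_letter[OF Cons] by simp
  qed
  then show ?thesis using w cls_ev by simp
qed

inductive_set Bs :: "kg set" where
  Bs0: "B0 \<in> Bs"
| Bsn: "x \<in> Bs \<Longrightarrow> - x \<in> Bs"
| Bsp: "x \<in> Bs \<Longrightarrow> y \<in> Bs \<Longrightarrow> x + y \<in> Bs"
| Bsc: "x \<in> Bs \<Longrightarrow> g + x - g \<in> Bs"

lemma Bs_zero: "0 \<in> Bs"
  using Bsp[OF Bs0 Bsn[OF Bs0]] by simp

lemma Bs_Zall: "x \<in> Bs \<Longrightarrow> \<forall>g. Z1 + (g + x - g) = (g + x - g) + Z1 \<and> Z2 + (g + x - g) = (g + x - g) + Z2"
proof (induction rule: Bs.induct)
  case Bs0
  then show ?case using S_Z[OF S_conj] by blast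
next
  case (Bsn x)
  show ?case
  proof
    fix g
    have e: "g + - x - g = - (g + x - g)" by (rule g_conj_minus)
    show "Z1 + (g + - x - g) = (g + - x - g) + Z1 \<and> Z2 + (g + - x - g) = (g + - x - g) + Z2"
      unfolding e using Bsn.IH g_comm_minus by blast
  qed
next
  case (Bsp x y)
  show ?case
  proof
    fix g
    have e: "g + (x + y) - g = (g + x - g) + (g + y - g)" by (rule g_conj_plus)
    show "Z1 + (g + (x + y) - g) = (g + (x + y) - g) + Z1 \<and> Z2 + (g + (x + y) - g) = (g + (x + y) - g) + Z2"
      unfolding e using Bsp.IH g_comm_plus by blast
  qed
next
  case (Bsc x h)
  show ?case
  proof
    fix g
    have e: "g + (h + x - h) - g = (g + h) + x - (g + h)" by (rule g_conj_conj)
    show "Z1 + (g + (h + x - h) - g) = (g + (h + x - h) - g) + Z1 \<and> Z2 + (g + (h + x - h) - g) = (g + (h + x - h) - g) + Z2"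
      unfolding e using Bsc.IH by blast
  qed
qed

lemma Z_Bs: "x \<in> Bs \<Longrightarrow> Z1 + x = x + Z1 \<and> Z2 + x = x + Z2"
proof -
  assume x: "x \<in> Bs"
  show ?thesis using spec[OF Bs_Zall[OF x], of 0] by simp
qed

definition Cz :: "kg set" where "Cz = {c. \<forall>x\<in>Bs. c + x = x + c}"

lemma Cz_Z: "Z1 \<in> Cz" "Z2 \<in> Cz"
  unfolding Cz_def using Z_Bs by auto

lemma Cz_zero: "0 \<in> Cz"
  unfolding Cz_def by simp

lemma Cz_neg: "c \<in> Cz \<Longrightarrow> - c \<in> Cz"
  unfolding Cz_def using g_comm_negc by blast

lemma Cz_iff: "c \<in> Cz \<longleftrightarrow> (\<forall>x\<in>Bs. c + x = x + c)"
  unfolding Cz_def by simp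

lemma Cz_plus:
  assumes cz: "c \<in> Cz" and dz: "d \<in> Cz" shows "c + d \<in> Cz"
  unfolding Cz_iff
proof
  fix x assume x: "x \<in> Bs"
  have c: "c + x = x + c" using cz x Cz_iff by blast
  have d: "d + x = x + d" using dz x Cz_iff by blast
  have "(c + d) + x = c + (d + x)" by (simp add: add.assoc)
  also have "\<dots> = c + (x + d)" using d by simp
  also have "\<dots> = (c + x) + d" by (simp add: add.assoc)
  also have "\<dots> = (x + c) + d" using c by simp
  finally show "c + d + x = x + (c + d)" by (simp add: add.assoc)
qed

lemma Cz_conj:
  assumes cz: "c \<in> Cz" shows "h + c - h \<in> Cz"
  unfolding Cz_iff
proof
  fix x assume x: "x \<in> Bs"
  let ?y = "- h + x - - h"
  have y: "?y \<in> Bs" using Bsc[OF x] .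
  have c: "c + ?y = ?y + c" using cz y Cz_iff by blast
  have xe: "x = h + ?y - h" by (simp del: add_uminus_conv_diff add: gsimp)
  have "(h + c - h) + (h + ?y - h) = h + (c + ?y) - h" by (simp del: add_uminus_conv_diff add: gsimp)
  also have "\<dots> = h + (?y + c) - h" using c by simp
  also have "\<dots> = (h + ?y - h) + (h + c - h)" by (simp del: add_uminus_conv_diff add: gsimp)
  finally show "h + c - h + x = x + (h + c - h)" using xe by simp
qed

lemma Cz_Bs: "c \<in> Cz \<Longrightarrow> x \<in> Bs \<Longrightarrow> c + x = x + c"
  unfolding Cz_def by blast

definition px :: "tgen word \<Rightarrow> kg" where "px p = cls (subst2 p x1w x2w)"
definition py :: "tgen word \<Rightarrow> kg" where "py p = cls (subst2 p y1w y2w)"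

lemma subst2_Nil[simp]: "subst2 [] u1 u2 = []"
  by (simp add: subst2_def)

lemma subst2_Cons: "subst2 (x # p) u1 u2 = subst2 [x] u1 u2 @ subst2 p u1 u2"
  by (simp add: subst2_def)

lemma subst2_app: "subst2 (p @ q) u1 u2 = subst2 p u1 u2 @ subst2 q u1 u2"
  by (simp add: subst2_def)

lemma px_Nil[simp]: "px [] = 0" by (simp add: px_def cls_Nil)
lemma py_Nil[simp]: "py [] = 0" by (simp add: py_def cls_Nil)
lemma px_Cons: "px (x # p) = px [x] + px p"
  unfolding px_def by (subst subst2_Cons) (simp add: cls_app)
lemma py_Cons: "py (x # p) = py [x] + py p"
  unfolding py_def by (subst subst2_Cons) (simp add: cls_app)

lemma tg4: "(x = (T1, True) \<Longrightarrow> P) \<Longrightarrow> (x = (T1, False) \<Longrightarrow> P) \<Longrightarrow> (x = (T2, True) \<Longrightarrow> P) \<Longrightarrow> (x = (T2, False) \<Longrightarrow> P) \<Longrightarrow> P"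
  by (cases x; case_tac a; case_tac b) auto

lemma cls_neg_single: "cls [(a, False)] = - cls [(a, True)]"
proof -
  have "inv_word [(a, True)] = [(a, False)]" by (simp add: flipl_def)
  then show ?thesis by (metis cls_inv)
qed

lemma px_letters: "px [(T1,True)] = A1" "px [(T1,False)] = - A1" "px [(T2,True)] = A2" "px [(T2,False)] = - A2"
  by (simp_all add: px_def subst2_def gw_def A1_def A2_def gen_def cls_neg_single flipl_def)

lemma py_letters: "py [(T1,True)] = B1" "py [(T1,False)] = - B1" "py [(T2,True)] = B2" "py [(T2,False)] = - B2"
  by (simp_all add: py_def subst2_def gw_def B1_def B2_def gen_def cls_neg_single flipl_def)

lemma Bs_cm_signs: "cm a b \<in> Bs \<Longrightarrow> cm (- a) b \<in> Bs \<and> cm a (- b) \<in> Bs \<and> cm (- a) (- b) \<in> Bs"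
proof -
  assume h: "cm a b \<in> Bs"
  have 1: "cm (- a) b \<in> Bs" unfolding cm_negL by (rule Bsc[OF Bsn[OF h]])
  have 2: "cm a (- b) \<in> Bs" unfolding cm_negR by (rule Bsc[OF Bsn[OF h]])
  have 3: "cm (- a) (- b) \<in> Bs" unfolding cm_negR by (rule Bsc[OF Bsn[OF 1]])
  show ?thesis using 1 2 3 by blast
qed

lemma Bs_gens: "cm A1 B1 \<in> Bs" "cm A1 B2 \<in> Bs" "cm A2 B1 \<in> Bs" "cm A2 B2 \<in> Bs"
  using cm_zero_comm[OF rel0] cm_zero_comm[OF rel1] Bs_zero Bs0 B0_eq rel2 Bsn[OF Bs0] by simp_all

lemma Bs_let: "cm (px [s]) (py [t]) \<in> Bs"
  by (cases s rule: tg4; cases t rule: tg4)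
     (simp_all add: px_letters py_letters Bs_gens Bs_cm_signs)

lemma Bs_xy1: "cm (px [s]) (py q) \<in> Bs"
proof (induction q)
  case Nil
  then show ?case using Bs_zero by simp
next
  case (Cons t q)
  show ?case unfolding py_Cons[of t q] cm_R by (rule Bsp[OF Bs_let Bsc[OF Cons]])
qed

lemma Bs_xy: "cm (px p) (py q) \<in> Bs"
proof (induction p)
  case Nil
  then show ?case using Bs_zero by simp
next
  case (Cons s p)
  show ?case unfolding px_Cons[of s p] cm_L by (rule Bsp[OF Bsc[OF Cons] Bs_xy1])
qed

lemma Bs_yx: "cm (py p) (px q) \<in> Bs"
  unfolding cm_swap[of "py p"] by (rule Bsn[OF Bs_xy])

lemma conj_gen:
  assumes ab: "a = b + z" and zc: "\<forall>y\<in>Bs. z + y = y + z" and x: "x \<in> Bs"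
  shows "a + x - a = b + x - b" "- a + x - - a = - b + x - - b"
proof -
  show "a + x - a = b + x - b" unfolding ab using zc x conj_by_comm by blast
  let ?y = "- b + x - - b"
  have y: "?y \<in> Bs" using Bsc[OF x] .
  have "- a + x - - a = - z + ?y - - z"
    unfolding ab by (simp del: add_uminus_conv_diff add: gsimp)
  also have "\<dots> = ?y" using zc y g_comm_conj g_comm_negc by blast
  finally show "- a + x - - a = - b + x - - b" .
qed

lemma conj_xy: "x \<in> Bs \<Longrightarrow> px [s] + x - px [s] = py [s] + x - py [s]"
proof -
  assume x: "x \<in> Bs"
  have z1: "\<forall>y\<in>Bs. Z1 + y = y + Z1" and z2: "\<forall>y\<in>Bs. Z2 + y = y + Z2" using Z_Bs by auto
  note c1 = conj_gen[OF A1_eq z1 x] and c2 = conj_gen[OF A2_eq z2 x]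
  show ?thesis
    using c1 c2 by (cases s rule: tg4) (simp_all add: px_letters py_letters)
qed

lemma let_all: "NR (comm (subst2 [s] y1w y2w) (subst2 [t] x1w x2w) @ inv_word (comm (subst2 [s] x1w x2w) (subst2 [t] y1w y2w)))"
  by (cases s rule: tg4; cases t rule: tg4)
     (simp_all only: let_1True_1True let_1True_1False let_1True_2True let_1True_2False
       let_1False_1True let_1False_1False let_1False_2True let_1False_2False
       let_2True_1True let_2True_1False let_2True_2True let_2True_2False
       let_2False_1True let_2False_1False let_2False_2True let_2False_2False)

lemma letchk: "cm (py [s]) (px [t]) = cm (px [s]) (py [t])"
  using eqG_of_NR[OF let_all[of s t]] unfolding px_def py_def cls_comm .

lemma F1_let: "cm (py [s]) (px W) = cm (px [s]) (py W)"
proof (induction W)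
  case Nil
  then show ?case by simp
next
  case (Cons t W)
  have "cm (py [s]) (px (t # W)) = cm (py [s]) (px [t]) + (px [t] + cm (py [s]) (px W) - px [t])"
    unfolding px_Cons[of t W] cm_R ..
  also have "\<dots> = cm (px [s]) (py [t]) + (px [t] + cm (px [s]) (py W) - px [t])"
    using letchk Cons by simp
  also have "\<dots> = cm (px [s]) (py [t]) + (py [t] + cm (px [s]) (py W) - py [t])"
    using conj_xy[OF Bs_xy[of "[s]" W], of t] by simp
  also have "\<dots> = cm (px [s]) (py (t # W))"
    unfolding py_Cons[of t W] cm_R ..
  finally show ?case .
qed

lemma F1: "cm (py v) (px W) = cm (px v) (py W)"
proof (induction v)
  case Nil
  then show ?case by simp
next
  case (Cons s v)
  have "cm (py (s # v)) (px W) = py [s] + cm (py v) (px W) - py [s] + cm (py [s]) (px W)"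
    unfolding py_Cons[of s v] cm_L ..
  also have "\<dots> = py [s] + cm (px v) (py W) - py [s] + cm (px [s]) (py W)"
    using Cons F1_let by simp
  also have "\<dots> = px [s] + cm (px v) (py W) - px [s] + cm (px [s]) (py W)"
    using conj_xy[OF Bs_xy[of v W], of s] by simp
  also have "\<dots> = cm (px (s # v)) (py W)"
    unfolding px_Cons[of s v] cm_L ..
  finally show ?case .
qed

lemma let_diff_Cz: "px [s] - py [s] \<in> Cz"
proof -
  have a: "A1 - B1 = Z1" unfolding Z1_eq using g_comm_minus[OF rel0] by simp
  have b: "- A1 - - B1 = - Z1" unfolding Z1_eq by (simp add: minus_add)
  have c: "A2 - B2 = Z2" unfolding Z2_eq using g_comm_minus[OF rel1] by simp
  have d: "- A2 - - B2 = - Z2" unfolding Z2_eq by (simp add: minus_add)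
  show ?thesis
    by (cases s rule: tg4) (simp_all only: px_letters py_letters a b c d Cz_Z Cz_neg)
qed

lemma D_Cz: "px p - py p \<in> Cz"
proof (induction p)
  case Nil
  then show ?case using Cz_zero by simp
next
  case (Cons s p)
  have "px (s # p) - py (s # p) = (px [s] + (px p - py p) - px [s]) + (px [s] - py [s])"
    unfolding px_Cons[of s p] py_Cons[of s p] by (simp del: add_uminus_conv_diff add: gsimp)
  then show ?case using Cz_plus[OF Cz_conj[OF Cons] let_diff_Cz] by simp
qed

lemma let_comm: "px [s] + py [s] = py [s] + px [s]"
  using comm_signs[OF rel0] comm_signs[OF rel1]
  by (cases s rule: tg4) (simp_all add: px_letters py_letters rel0 rel1)

lemma F2: "px W + py W = py W + px W"
proof (induction W)
  case Nil
  then show ?case by simp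
next
  case (Cons s W)
  define a where "a = px [s]"
  define b where "b = py [s]"
  define A where "A = px W"
  define B where "B = py W"
  define g where "g = cm b A"
  define D where "D = a - b"
  have IH: "A + B = B + A" using Cons unfolding A_def B_def .
  have ab: "a + b = b + a" unfolding a_def b_def by (rule let_comm)
  have g2: "g = cm a B" unfolding g_def a_def b_def A_def B_def by (rule F1_let)
  have gB: "g \<in> Bs" unfolding g_def b_def A_def by (rule Bs_yx)
  have DC: "D \<in> Cz" unfolding D_def a_def b_def by (rule let_diff_Cz)
  have e1: "A + b = - g + b + A" unfolding g_def cm_def by (simp del: add_uminus_conv_diff add: gsimp)
  have e2: "B + a = - g + a + B" unfolding g2 cm_def by (simp del: add_uminus_conv_diff add: gsimp)
  have aD: "a = D + b" unfolding D_def by simp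
  have Db: "D + b = b + D"
  proof -
    have "b + D = b + a - b" unfolding D_def by (simp del: add_uminus_conv_diff add: gsimp)
    also have "\<dots> = a" using ab by (metis add_diff_cancel)
    finally show ?thesis using aD by simp
  qed
  have Dg: "D + - g = - g + D" using Cz_Bs[OF DC Bsn[OF gB]] .
  have key: "a + - g + b = b + - g + a"
  proof -
    have "a + - g + b = D + b + - g + b" using aD by simp
    also have "\<dots> = b + D + - g + b" using Db by simp
    also have "\<dots> = b + (D + - g) + b" by (simp only: add.assoc)
    also have "\<dots> = b + (- g + D) + b" using Dg by simp
    also have "\<dots> = b + - g + (D + b)" by (simp only: add.assoc)
    also have "\<dots> = b + - g + a" using aD by simp
    finally show ?thesis .
  qed
  have "px (s # W) + py (s # W) = a + (A + b) + B" unfolding px_Cons[of s W] py_Cons[of s W] a_def b_def A_def B_def by (simp only: add.assoc)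
  also have "\<dots> = (a + - g + b) + (A + B)" using e1 by (simp only: add.assoc)
  also have "\<dots> = (b + - g + a) + (B + A)" using key IH by simp
  also have "\<dots> = b + (- g + a + B) + A" by (simp only: add.assoc)
  also have "\<dots> = b + (B + a) + A" using e2 by simp
  also have "\<dots> = py (s # W) + px (s # W)" unfolding px_Cons[of s W] py_Cons[of s W] a_def b_def A_def B_def by (simp only: add.assoc)
  finally show ?case .
qed

lemma F3: "- py W + px W \<in> Cz"
proof -
  have 1: "(- py W) + (px W - py W) - (- py W) \<in> Cz" by (rule Cz_conj[OF D_Cz])
  have 2: "(- py W) + (px W - py W) - (- py W) = - py W + px W"
    by (simp del: add_uminus_conv_diff add: gsimp)
  from 1 show ?thesis unfolding 2 .
qed

lemma E1: "eqG (comm (subst2 v y1w y2w) (subst2 W x1w x2w)) (comm (subst2 v x1w x2w) (subst2 W y1w y2w))"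
  using F1[of v W] unfolding px_def py_def cls_comm[symmetric] cls_eq_iff .

lemma E2: "eqG ((inv_word (subst2 W y1w y2w) @ subst2 W x1w x2w) @ subst2 W y1w y2w)
              (subst2 W y1w y2w @ (inv_word (subst2 W y1w y2w) @ subst2 W x1w x2w))"
proof -
  have "- py W + px W + py W = py W + (- py W + px W)"
    using F2[of W] by (simp add: add.assoc)
  then show ?thesis unfolding cls_eq_iff[symmetric] cls_app cls_inv px_def py_def .
qed

lemma E3: "eqG ((inv_word (subst2 W y1w y2w) @ subst2 W x1w x2w) @ comm (subst2 v y1w y2w) (subst2 W x1w x2w))
              (comm (subst2 v y1w y2w) (subst2 W x1w x2w) @ (inv_word (subst2 W y1w y2w) @ subst2 W x1w x2w))"
proof -
  have "(- py W + px W) + cm (py v) (px W) = cm (py v) (px W) + (- py W + px W)"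
    using Cz_Bs[OF F3 Bs_yx] .
  then show ?thesis unfolding cls_eq_iff[symmetric] cls_app cls_inv cls_comm px_def py_def .
qed

definition cst :: "nat \<Rightarrow> kgen word \<Rightarrow> kgen word \<Rightarrow> bool" where
  "cst k u v \<longleftrightarrow> (\<exists>ps. length ps \<le> k \<and> (\<forall>(c, r, e)\<in>set ps. r \<in> K_relators) \<and> free_eq (u @ inv_word v) (conj_prod ps))"

lemma cst_free: "free_eq u v \<Longrightarrow> cst 0 u v"
  unfolding cst_def
proof (rule exI[of _ "[]"], simp)
  assume "free_eq u v"
  then have "free_eq (u @ inv_word v) (v @ inv_word v)" by (rule fe_app) simp
  then show "free_eq (u @ inv_word v) []" using fe_inv_r fe_trans by blast
qed

lemma cst_mono: "cst k u v \<Longrightarrow> k \<le> k' \<Longrightarrow> cst k' u v"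
  unfolding cst_def by (meson order_trans)

lemma cst_trans: "cst k1 u v \<Longrightarrow> cst k2 v w \<Longrightarrow> cst (k1 + k2) u w"
  unfolding cst_def
proof (elim exE conjE)
  fix ps qs
  assume a: "length ps \<le> k1" "\<forall>(c, r, e)\<in>set ps. r \<in> K_relators" "free_eq (u @ inv_word v) (conj_prod ps)"
    and b: "length qs \<le> k2" "\<forall>(c, r, e)\<in>set qs. r \<in> K_relators" "free_eq (v @ inv_word w) (conj_prod qs)"
  have "free_eq (u @ inv_word w) (u @ inv_word v @ v @ inv_word w)"
    by (rule fe_sym[OF fe_cancel_l])
  moreover have "free_eq ((u @ inv_word v) @ (v @ inv_word w)) (conj_prod ps @ conj_prod qs)"
    by (rule fe_app[OF a(3) b(3)])
  ultimately have "free_eq (u @ inv_word w) (conj_prod (ps @ qs))" using fe_trans by simp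
  then show "\<exists>ps. length ps \<le> k1 + k2 \<and> (\<forall>(c, r, e)\<in>set ps. r \<in> K_relators) \<and> free_eq (u @ inv_word w) (conj_prod ps)"
    using a b by (intro exI[of _ "ps @ qs"]) auto
qed

lemma cst_sym: "cst k u v \<Longrightarrow> cst k v u"
  unfolding cst_def
proof (elim exE conjE)
  fix ps
  assume a: "length ps \<le> k" "\<forall>(c, r, e)\<in>set ps. r \<in> K_relators" "free_eq (u @ inv_word v) (conj_prod ps)"
  have "free_eq (v @ inv_word u) (conj_prod (flipps ps))"
    using fe_inv[OF a(3)] inv_conj_prod by simp
  then show "\<exists>ps. length ps \<le> k \<and> (\<forall>(c, r, e)\<in>set ps. r \<in> K_relators) \<and> free_eq (v @ inv_word u) (conj_prod ps)"
    using a set_flipps[OF a(2)] by (intro exI[of _ "flipps ps"]) auto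
qed

lemma cst_ctx: "cst k u v \<Longrightarrow> cst k (p @ u @ q) (p @ v @ q)"
  unfolding cst_def
proof (elim exE conjE)
  fix ps
  assume a: "length ps \<le> k" "\<forall>(c, r, e)\<in>set ps. r \<in> K_relators" "free_eq (u @ inv_word v) (conj_prod ps)"
  have "free_eq ((p @ u @ q) @ inv_word (p @ v @ q)) (p @ u @ inv_word v @ inv_word p)"
    using fe_cancel_r[of "p @ u" q "inv_word v @ inv_word p"] by simp
  moreover have "free_eq (p @ u @ inv_word v @ inv_word p) (p @ conj_prod ps @ inv_word p)"
    using fe_ctx[OF a(3), of p "inv_word p"] by simp
  ultimately have "free_eq ((p @ u @ q) @ inv_word (p @ v @ q)) (conj_prod (shiftp p ps))"
    using fe_trans[OF fe_trans conj_shift] by blast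
  then show "\<exists>ps. length ps \<le> k \<and> (\<forall>(c, r, e)\<in>set ps. r \<in> K_relators) \<and> free_eq ((p @ u @ q) @ inv_word (p @ v @ q)) (conj_prod ps)"
    using a set_shiftp[OF a(2)] by (intro exI[of _ "shiftp p ps"]) auto
qed

lemma cst_ctxL: "cst k u v \<Longrightarrow> cst k (p @ u) (p @ v)"
  using cst_ctx[of k u v p "[]"] by simp

lemma cst_ctxR: "cst k u v \<Longrightarrow> cst k (u @ q) (v @ q)"
  using cst_ctx[of k u v "[]" q] by simp

lemma cst_free_l: "free_eq u u' \<Longrightarrow> cst k u v \<Longrightarrow> cst k u' v"
  using cst_trans[OF cst_free[OF fe_sym]] by fastforce

lemma cst_free_r: "cst k u v \<Longrightarrow> free_eq v v' \<Longrightarrow> cst k u v'"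
  using cst_trans[OF _ cst_free] by fastforce

lemma cst_app: "cst k1 u u' \<Longrightarrow> cst k2 v v' \<Longrightarrow> cst (k1 + k2) (u @ v) (u' @ v')"
  using cst_trans[OF cst_ctxR cst_ctxL] by blast

lemma cst_inv: "cst k u v \<Longrightarrow> cst k (inv_word u) (inv_word v)"
proof -
  assume h: "cst k u v"
  have "cst k (inv_word u @ u @ inv_word v) (inv_word u @ v @ inv_word v)" by (rule cst_ctx[OF h])
  moreover have "free_eq (inv_word u @ u @ inv_word v) (inv_word v)" using fe_cancel_l[of "[]" u "inv_word v"] by simp
  moreover have "free_eq (inv_word u @ v @ inv_word v) (inv_word u)" using fe_cancel_r[of "inv_word u" v "[]"] by simp
  ultimately have "cst k (inv_word v) (inv_word u)" using cst_free_l cst_free_r by blast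
  then show ?thesis by (rule cst_sym)
qed

lemma cst_eqG: "eqG u v \<Longrightarrow> \<exists>k. cst k u v"
  unfolding eqG_def NR_def null_rep_def cst_def by blast

lemma cst_null: "cst k u v \<Longrightarrow> cst k (u @ inv_word v) []"
  unfolding cst_def by simp

lemma cst_area: "cst k w [] \<Longrightarrow> null_rep K_relators w \<and> area K_relators w \<le> k"
  unfolding cst_def
proof (elim exE conjE)
  fix ps
  assume a: "length ps \<le> k" "\<forall>(c, r, e)\<in>set ps. r \<in> K_relators" "free_eq (w @ inv_word []) (conj_prod ps)"
  have f: "free_eq w (conj_prod ps)" using a(3) by simp
  have "null_rep K_relators w" unfolding null_rep_def using a(2) f by blast
  moreover have "area K_relators w \<le> length ps"
    unfolding area_def by (rule Least_le) (use a(2) f in blast)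
  ultimately show "null_rep K_relators w \<and> area K_relators w \<le> k" using a(1) by simp
qed

lemma wpow_0[simp]: "wpow w 0 = []" by (simp add: wpow_def)
lemma wpow_Suc: "wpow w (Suc n) = w @ wpow w n" by (simp add: wpow_def)
lemma wpow_Suc': "wpow w (Suc n) = wpow w n @ w"
  by (induction n) (simp_all add: wpow_Suc)

lemma wpow_fe: "free_eq u v \<Longrightarrow> free_eq (wpow u n) (wpow v n)"
  by (induction n) (simp_all add: wpow_Suc fe_app)

lemma conj_wpow: "free_eq (wpow (p @ w @ inv_word p) n) (p @ wpow w n @ inv_word p)"
proof (induction n)
  case 0
  then show ?case using fe_sym[OF fe_inv_r[of p]] by simp
next
  case (Suc n)
  have "free_eq (wpow (p @ w @ inv_word p) (Suc n)) ((p @ w @ inv_word p) @ (p @ wpow w n @ inv_word p))"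
    unfolding wpow_Suc by (rule fe_app[OF fe_refl Suc])
  moreover have "free_eq ((p @ w) @ inv_word p @ p @ (wpow w n @ inv_word p)) ((p @ w) @ (wpow w n @ inv_word p))"
    by (rule fe_cancel_l)
  ultimately show ?case unfolding wpow_Suc using fe_trans by fastforce
qed

lemma M1: "cst k (Z @ Q) (Q @ Z) \<Longrightarrow> cst (n * k) (wpow Z n @ Q) (Q @ wpow Z n)"
proof (induction n)
  case 0
  then show ?case using cst_free[OF fe_refl] by simp
next
  case (Suc n)
  have 1: "cst (n * k) (Z @ wpow Z n @ Q) (Z @ Q @ wpow Z n)" using cst_ctxL[OF Suc.IH[OF Suc.prems]] by simp
  have 2: "cst k ((Z @ Q) @ wpow Z n) ((Q @ Z) @ wpow Z n)" using cst_ctxR[OF Suc.prems] .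
  have "cst (n * k + k) (Z @ wpow Z n @ Q) ((Q @ Z) @ wpow Z n)" using cst_trans[OF 1] 2 by simp
  then show ?case by (simp add: wpow_Suc add.commute)
qed

lemma M2: "cst k (Z @ Q) (Q @ Z) \<Longrightarrow> cst (n * n * k) (wpow (Q @ Z) n) (wpow Q n @ wpow Z n)"
proof (induction n)
  case 0
  then show ?case using cst_free[OF fe_refl] by simp
next
  case (Suc n)
  have 1: "cst (n * n * k) (wpow (Q @ Z) n @ (Q @ Z)) ((wpow Q n @ wpow Z n) @ (Q @ Z))"
    using cst_ctxR[OF Suc.IH[OF Suc.prems]] .
  have 2: "cst (n * k) (wpow Q n @ (wpow Z n @ Q) @ Z) (wpow Q n @ (Q @ wpow Z n) @ Z)"
    using cst_ctx[OF M1[OF Suc.prems]] .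
  have "cst (n * n * k + n * k) (wpow (Q @ Z) n @ (Q @ Z)) (wpow Q n @ (Q @ wpow Z n) @ Z)"
    using cst_trans[OF 1] 2 by simp
  then have "cst (n * n * k + n * k) (wpow (Q @ Z) (Suc n)) (wpow Q (Suc n) @ wpow Z (Suc n))"
    by (simp add: wpow_Suc')
  then show ?case by (rule cst_mono) (simp add: algebra_simps)
qed

lemma M3: "cst k u u' \<Longrightarrow> cst (n * k) (wpow (u @ P) n) (wpow (u' @ P) n)"
proof (induction n)
  case 0
  then show ?case using cst_free[OF fe_refl] by simp
next
  case (Suc n)
  have 1: "cst k (u @ P @ wpow (u @ P) n) (u' @ P @ wpow (u @ P) n)" using cst_ctxR[OF Suc.prems] by simp
  have 2: "cst (n * k) ((u' @ P) @ wpow (u @ P) n) ((u' @ P) @ wpow (u' @ P) n)" using cst_ctxL[OF Suc.IH[OF Suc.prems]] .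
  have "cst (k + n * k) (u @ P @ wpow (u @ P) n) ((u' @ P) @ wpow (u' @ P) n)" using cst_trans[OF 1] 2 by simp
  then show ?case by (simp add: wpow_Suc)
qed

abbreviation Wd :: "tgen word \<Rightarrow> tgen word \<Rightarrow> nat \<Rightarrow> kgen word" where
  "Wd v w N \<equiv> comm (subst2 v (gw Y1 True) (gw Y2 True)) (wpow (subst2 w (gw X1 True) (gw X2 True)) N)
             @ inv_word (comm (subst2 v (gw X1 True) (gw X2 True)) (wpow (subst2 w (gw Y1 True) (gw Y2 True)) N))"

lemma main_bound: "\<exists>K. \<forall>N. cst (K * N * N) (Wd v w N) []"
proof -
  define vy where "vy = subst2 v y1w y2w"
  define vx where "vx = subst2 v x1w x2w"
  define Wx where "Wx = subst2 w x1w x2w"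
  define Wy where "Wy = subst2 w y1w y2w"
  define a where "a = comm vy Wx"
  define a' where "a' = comm vx Wy"
  define P where "P = Wy"
  define Z where "Z = inv_word Wy @ Wx"
  obtain k1 where k1: "cst k1 (Z @ P) (P @ Z)"
    using cst_eqG[OF E2[of w]] unfolding Z_def P_def Wx_def Wy_def by blast
  obtain k2 where k2: "cst k2 (Z @ a) (a @ Z)"
    using cst_eqG[OF E3[of w v]] unfolding Z_def a_def vy_def Wx_def Wy_def by blast
  obtain k3 where k3: "cst k3 a a'"
    using cst_eqG[OF E1[of v w]] unfolding a_def a'_def vy_def vx_def Wx_def Wy_def by blast
  have fx: "free_eq (P @ Z) Wx"
    unfolding P_def Z_def using fe_cancel_r[of "[]" Wy Wx] by simp
  have fa: "free_eq ((a @ P) @ Z) (vy @ Wx @ inv_word vy)"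
  proof -
    have 1: "free_eq ((vy @ Wx @ inv_word vy @ inv_word Wx) @ Wy @ inv_word Wy @ Wx) ((vy @ Wx @ inv_word vy @ inv_word Wx) @ Wx)"
      by (rule fe_cancel_r)
    have 2: "free_eq ((vy @ Wx @ inv_word vy) @ inv_word Wx @ Wx @ []) ((vy @ Wx @ inv_word vy) @ [])"
      by (rule fe_cancel_l)
    show ?thesis using fe_trans[OF 1[simplified] 2[simplified]] unfolding a_def P_def Z_def comm_def by simp
  qed
  have fa': "free_eq (a' @ P) (vx @ Wy @ inv_word vx)"
    unfolding a'_def P_def comm_def using fe_cancel_l[of "vx @ Wy @ inv_word vx" Wy "[]"] by simp
  have c12: "cst (k2 + k1) (Z @ (a @ P)) ((a @ P) @ Z)"
  proof -
    have c1: "cst k2 (Z @ a @ P) (a @ Z @ P)" using cst_ctxR[OF k2, of P] by simp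
    have c2: "cst k1 (a @ Z @ P) (a @ P @ Z)" using cst_ctxL[OF k1, of a] by simp
    show ?thesis using cst_trans[OF c1 c2] by simp
  qed
  show ?thesis
  proof (rule exI[of _ "2 * k1 + k2 + k3"], rule allI)
    fix N
    let ?L = "comm vy (wpow Wx N)"
    let ?R = "comm vx (wpow Wy N)"
    have s1: "free_eq ?L (wpow ((a @ P) @ Z) N @ inv_word (wpow (P @ Z) N))"
    proof -
      have "free_eq (vy @ wpow Wx N @ inv_word vy) (wpow ((a @ P) @ Z) N)"
        using fe_trans[OF fe_sym[OF conj_wpow] wpow_fe[OF fe_sym[OF fa]]] .
      moreover have "free_eq (inv_word (wpow Wx N)) (inv_word (wpow (P @ Z) N))"
        by (rule fe_inv[OF wpow_fe[OF fe_sym[OF fx]]])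
      ultimately show ?thesis unfolding comm_def using fe_app by fastforce
    qed
    have s2: "cst (N * N * (k2 + k1)) (wpow ((a @ P) @ Z) N) (wpow (a @ P) N @ wpow Z N)"
      by (rule M2[OF c12])
    have s3: "cst (N * N * k1) (inv_word (wpow (P @ Z) N)) (inv_word (wpow Z N) @ inv_word (wpow P N))"
      using cst_inv[OF M2[OF k1, of N]] by simp
    have s4: "cst (N * N * (k2 + k1) + N * N * k1) (wpow ((a @ P) @ Z) N @ inv_word (wpow (P @ Z) N))
       ((wpow (a @ P) N @ wpow Z N) @ (inv_word (wpow Z N) @ inv_word (wpow P N)))"
      by (rule cst_app[OF s2 s3])
    have s5: "free_eq ((wpow (a @ P) N @ wpow Z N) @ (inv_word (wpow Z N) @ inv_word (wpow P N)))
        (wpow (a @ P) N @ inv_word (wpow P N))"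
      using fe_cancel_r[of "wpow (a @ P) N" "wpow Z N" "inv_word (wpow P N)"] by simp
    have s6: "cst (N * k3) (wpow (a @ P) N @ inv_word (wpow P N)) (wpow (a' @ P) N @ inv_word (wpow P N))"
      by (rule cst_ctxR[OF M3[OF k3]])
    have s7: "free_eq (wpow (a' @ P) N @ inv_word (wpow P N)) ?R"
    proof -
      have "free_eq (wpow (a' @ P) N) (vx @ wpow Wy N @ inv_word vx)"
        using fe_trans[OF wpow_fe[OF fa'] conj_wpow] .
      then show ?thesis unfolding comm_def P_def using fe_app[OF _ fe_refl] by fastforce
    qed
    have "cst (N * N * (k2 + k1) + N * N * k1) ?L (wpow (a @ P) N @ inv_word (wpow P N))"
      using cst_free_r[OF cst_free_l[OF fe_sym[OF s1] s4] s5] .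
    then have "cst (N * N * (k2 + k1) + N * N * k1 + N * k3) ?L (wpow (a' @ P) N @ inv_word (wpow P N))"
      using cst_trans s6 by blast
    then have "cst (N * N * (k2 + k1) + N * N * k1 + N * k3) ?L ?R"
      using cst_free_r s7 by blast
    then have c: "cst (N * N * (k2 + k1) + N * N * k1 + N * k3) (?L @ inv_word ?R) []"
      by (rule cst_null)
    have le3: "N * k3 \<le> N * N * k3" by (cases N) auto
    have "N * N * (k2 + k1) + N * N * k1 + N * k3 \<le> (2 * k1 + k2 + k3) * N * N"
      using le3 by (simp add: algebra_simps)
    then have "cst ((2 * k1 + k2 + k3) * N * N) (?L @ inv_word ?R) []"
      by (rule cst_mono[OF c])
    then show "cst ((2 * k1 + k2 + k3) * N * N) (Wd v w N) []"
      unfolding vy_def vx_def Wx_def Wy_def .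
  qed
qed

lemma UNIV_tgen: "(UNIV :: tgen set) = {T1, T2}"
  using tgen.exhaust by auto

lemma finite_pairs: "finite {(v :: tgen word, w :: tgen word). length v \<le> m \<and> length w \<le> m}"
proof -
  have fU: "finite (UNIV :: (tgen \<times> bool) set)"
    by (rule finite_Prod_UNIV) (simp_all add: UNIV_tgen)
  let ?L = "{xs :: tgen word. set xs \<subseteq> UNIV \<and> length xs \<le> m}"
  have "finite ?L" by (rule finite_lists_length_le[OF fU])
  then have "finite (?L \<times> ?L)" by simp
  moreover have "{(v :: tgen word, w :: tgen word). length v \<le> m \<and> length w \<le> m} \<subseteq> ?L \<times> ?L" by auto
  ultimately show ?thesis using finite_subset by blast
qed

theorem lemma4p4:
  fixes m :: nat
  shows "\<exists>C::real. C > 0 \<and>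
    (\<forall>(v::tgen word) (w::tgen word) (N::nat). length v \<le> m \<and> length w \<le> m \<longrightarrow>
      (let W = comm (subst2 v (gw Y1 True) (gw Y2 True)) (wpow (subst2 w (gw X1 True) (gw X2 True)) N)
             @ inv_word (comm (subst2 v (gw X1 True) (gw X2 True)) (wpow (subst2 w (gw Y1 True) (gw Y2 True)) N))
       in null_rep K_relators W \<and> real (area K_relators W) \<le> C * real N ^ 2))"
proof -
  define S where "S = {(v :: tgen word, w :: tgen word). length v \<le> m \<and> length w \<le> m}"
  define f where "f p = (SOME K. \<forall>N. cst (K * N * N) (Wd (fst p) (snd p) N) [])" for p :: "tgen word \<times> tgen word"
  define Km where "Km = Max (f ` S)"
  have finS: "finite S" unfolding S_def by (rule finite_pairs)
  have fp: "\<forall>N. cst (f p * N * N) (Wd (fst p) (snd p) N) []" for p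
    unfolding f_def by (rule someI_ex[OF main_bound])
  show ?thesis
  proof (rule exI[of _ "real Km + 1"], intro conjI allI impI)
    show "real Km + 1 > 0" by simp
    fix v w :: "tgen word" and N :: nat
    assume len: "length v \<le> m \<and> length w \<le> m"
    have pS: "(v, w) \<in> S" unfolding S_def using len by simp
    have fle: "f (v, w) \<le> Km" unfolding Km_def using finS pS by (simp add: Max_ge)
    have "cst (f (v, w) * N * N) (Wd v w N) []" using fp[of "(v, w)"] by simp
    then have "cst (Km * N * N) (Wd v w N) []" by (rule cst_mono) (simp add: fle)
    then have r: "null_rep K_relators (Wd v w N) \<and> area K_relators (Wd v w N) \<le> Km * N * N"
      by (rule cst_area)
    have "real (area K_relators (Wd v w N)) \<le> real (Km * N * N)" using r by linarith
    also have "\<dots> = real Km * real N ^ 2" by (simp add: power2_eq_square)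
    also have "\<dots> \<le> (real Km + 1) * real N ^ 2" by (simp add: mult_right_mono)
    finally show "let W = Wd v w N in null_rep K_relators W \<and> real (area K_relators W) \<le> (real Km + 1) * real N ^ 2"
      using r by (simp add: Let_def)
  qed
qed

end
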